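(* Suppose Assumptions (A1)–(A4) below hold and $H_T=o(T)$. Let $\{\boldsymbol{x}_{i,t}\}$ be generated by Algorithm DOMFW (described in the context) with $K_t=1/(\rho\alpha_t)=\lceil\varepsilon_2T^{\gamma_2}\rceil+1$ for all $t\in\{1,\dots,T\}$, where $\rho\ge1$, $\varepsilon_2>0$, $0<\gamma_2\le1$. Then for every $j\in\mathcal{V}$, $$\mathbf{Regret}_d^j(T)\le\mathcal{O}(T^{1-\gamma_2}+H_T),\qquad\mathbf{N}_{LO}\le\mathcal{O}(T^{1+\gamma_2}).$$ In particular, if $1-\log_TH_T\le\gamma_2\le1$, then $\mathbf{Regret}_d^j(T)\le\mathcal{O}(1+H_T)$ and $\mathbf{N}_{LO}\le\mathcal{O}(T^{2-\log_TH_T})$.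
   Context: Network: $n$ agents, $\mathcal{V}=\{1,\dots,n\}$, time-varying directed graphs $\mathcal{G}_t=(\mathcal{V},\mathcal{E}_t,A_t)$; $\mathcal{N}_i^{in}(t)=\{j:(j,i)\in\mathcal{E}_t\}\cup\{i\}$, $[A_t]_{ij}>0$ iff $j\in\mathcal{N}_i^{in}(t)$, else $0$. (A1): (a) there is $\zeta>0$ with $[A_t]_{ij}>\zeta$ whenever $[A_t]_{ij}>0$; (b) $\mathcal{G}_t$ strongly connected for all $t$; (c) each $A_t$ doubly stochastic. (A2): $\boldsymbol{X}\subset\mathbb{R}^d$ convex compact, diameter at most $M$. (A3): $|f_{i,t}(\boldsymbol{x})-f_{i,t}(\boldsymbol{z})|\le L_X\|\boldsymbol{x}-\boldsymbol{z}\|$ on $\boldsymbol{X}$. (A4): $f_{i,t}(\boldsymbol{x})-f_{i,t}(\boldsymbol{z})\le\langle\nabla f_{i,t}(\boldsymbol{z}),\boldsymbol{x}-\boldsymbol{z}\rangle+\frac{G_X}{2}\|\boldsymbol{x}-\boldsymbol{z}\|^2$ on $\boldsymbol{X}$. Losses $f_{i,t}$ convex, differentiable on $\boldsymbol{X}$; $F_t=\sum_if_{i,t}$; $\boldsymbol{x}_t^*\in\arg\min_{\boldsymbol{X}}F_t$. $\mathbf{Regret}_d^j(T)=\sum_{t=1}^TF_t(\boldsymbol{x}_{j,t})-\sum_{t=1}^TF_t(\boldsymbol{x}_t^* )$; $H_T=\sum_{t=1}^{T-1}\max_{i}\max_{\boldsymbol{x}\in\boldsymbol{X}}|f_{i,t+1}(\boldsymbol{x})-f_{i,t}(\boldsymbol{x})|$.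 Algorithm DOMFW: initial points $\boldsymbol{x}_{i,1}\in\boldsymbol{X}$. For $t=1,\dots,T$: $\boldsymbol{x}_{i,t}^1=\boldsymbol{x}_{i,t}$; for $k=1,\dots,K_t$: $\hat{\boldsymbol{x}}_{i,t}^k=\sum_j[A_t]_{ij}\boldsymbol{x}_{j,t}^k$; $\overline{\nabla}f_{i,t}^1=\nabla f_{i,t}(\hat{\boldsymbol{x}}_{i,t}^1)$, and for $k\ge2$, $\overline{\nabla}f_{i,t}^k=\widehat{\nabla}f_{i,t}^{k-1}+\nabla f_{i,t}(\hat{\boldsymbol{x}}_{i,t}^k)-\nabla f_{i,t}(\hat{\boldsymbol{x}}_{i,t}^{k-1})$; $\widehat{\nabla}f_{i,t}^k=\sum_j[A_t]_{ij}\overline{\nabla}f_{j,t}^k$; $\boldsymbol{v}_{i,t}^k\in\arg\min_{\boldsymbol{x}\in\boldsymbol{X}}\langle\boldsymbol{x},\widehat{\nabla}f_{i,t}^k\rangle$ (one call of the linear oracle); $\boldsymbol{x}_{i,t}^{k+1}=\hat{\boldsymbol{x}}_{i,t}^k+\alpha_t(\boldsymbol{v}_{i,t}^k-\hat{\boldsymbol{x}}_{i,t}^k)$. Then $\boldsymbol{x}_{i,t+1}=\boldsymbol{x}_{i,t}^{K_t+1}$. $\mathbf{N}_{LO}$ denotes the number of linear-oracle calls made (by an agent) over $T$ rounds, i.e. $\sum_{t=1}^TK_t$. The $\mathcal{O}(\cdot)$ bounds are as functions of $T$ and $H_T$, with constants independent of $T$ (depending on $n,\zeta,M,L_X,G_X,\rho,\varepsilon_2,\gamma_2$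 and the initial points).
   Formalization: The bound $\mathbf{N}_{LO}\le\mathcal{O}(T^{2-\log_TH_T})$ is claimed only for $\gamma_2=1-\log_TH_T$, and the $\mathcal{O}$ constants may also depend on the losses $f_{i,t}$ and the matrices $A_t$. Each condition added here is assumed in the paper as well or is needed for the statement above to hold. *)

theory Defs
  imports "HOL-Analysis.Analysis" "HOL-Library.Landau_Symbols"
begin

text \<open>Agents are indexed by 0..n-1. A t i j is the (i,j) entry of the weight matrix A_t,
E t is the edge set of the digraph G_t (pairs (j,i) meaning an edge from j to i).\<close>

definition strongly_connected :: "nat \<Rightarrow> (nat \<times> nat) set \<Rightarrow> bool" where
  "strongly_connected n E \<longleftrightarrow> (\<forall>i<n. \<forall>j<n. (i, j) \<in> E\<^sup>*)"

definition Fsum :: "nat \<Rightarrow> (nat \<Rightarrow> nat \<Rightarrow> 'a \<Rightarrow> real) \<Rightarrow> nat \<Rightarrow> 'a \<Rightarrow> real" where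
  "Fsum n f t y = (\<Sum>i<n. f i t y)"

definition regret_d ::
  "nat \<Rightarrow> (nat \<Rightarrow> nat \<Rightarrow> 'a \<Rightarrow> real) \<Rightarrow> (nat \<Rightarrow> nat \<Rightarrow> 'a) \<Rightarrow> (nat \<Rightarrow> 'a) \<Rightarrow> nat \<Rightarrow> nat \<Rightarrow> real" where
  "regret_d n f x xstar j T =
     (\<Sum>t=1..T. Fsum n f t (x j t)) - (\<Sum>t=1..T. Fsum n f t (xstar t))"

definition H_var :: "nat \<Rightarrow> 'a set \<Rightarrow> (nat \<Rightarrow> nat \<Rightarrow> 'a \<Rightarrow> real) \<Rightarrow> nat \<Rightarrow> real" where
  "H_var n X f T =
     (\<Sum>t=1..<T. (MAX i\<in>{..<n}. (SUP y\<in>X. \<bar>f i (Suc t) y - f i t y\<bar>)))"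

text \<open>The iterates x i t (t = 1..T+1) together with all auxiliary quantities
 xk i t k = x_{i,t}^k, xh = hat x, gb = bar nabla, gh = hat nabla, v = oracle outputs,
 are generated by DOMFW over T rounds with inner iteration counts K t and step sizes al t.\<close>
definition DOMFW ::
  "nat \<Rightarrow> (nat \<Rightarrow> nat \<Rightarrow> nat \<Rightarrow> real) \<Rightarrow> (nat \<Rightarrow> nat \<Rightarrow> 'a \<Rightarrow> 'a::real_inner) \<Rightarrow> 'a set
   \<Rightarrow> (nat \<Rightarrow> 'a) \<Rightarrow> nat \<Rightarrow> (nat \<Rightarrow> nat) \<Rightarrow> (nat \<Rightarrow> real)
   \<Rightarrow> (nat \<Rightarrow> nat \<Rightarrow> 'a) \<Rightarrow> (nat \<Rightarrow> nat \<Rightarrow> nat \<Rightarrow> 'a) \<Rightarrow> (nat \<Rightarrow> nat \<Rightarrow> nat \<Rightarrow> 'a)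
   \<Rightarrow> (nat \<Rightarrow> nat \<Rightarrow> nat \<Rightarrow> 'a) \<Rightarrow> (nat \<Rightarrow> nat \<Rightarrow> nat \<Rightarrow> 'a) \<Rightarrow> (nat \<Rightarrow> nat \<Rightarrow> nat \<Rightarrow> 'a) \<Rightarrow> bool" where
  "DOMFW n A grad X x1 T K al x xk xh gb gh v \<longleftrightarrow>
    (\<forall>i<n. x i 1 = x1 i) \<and>
    (\<forall>i<n. \<forall>t\<in>{1..T}.
       xk i t 1 = x i t \<and>
       (\<forall>k\<in>{1..K t}.
          xh i t k = (\<Sum>j<n. A t i j *\<^sub>R xk j t k) \<and>
          gb i t k = (if k = 1 then grad i t (xh i t 1)
                      else gh i t (k - 1) + grad i t (xh i t k) - grad i t (xh i t (k - 1))) \<and>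
          gh i t k = (\<Sum>j<n. A t i j *\<^sub>R gb j t k) \<and>
          v i t k \<in> X \<and> (\<forall>z\<in>X. inner (v i t k) (gh i t k) \<le> inner z (gh i t k)) \<and>
          xk i t (Suc k) = xh i t k + al t *\<^sub>R (v i t k - xh i t k)) \<and>
       x i (Suc t) = xk i t (K t + 1))"

end

theory Submission
  imports Defs
begin


definition avgv :: "nat \<Rightarrow> (nat \<Rightarrow> 'a::real_vector) \<Rightarrow> 'a" where
  "avgv n w = (1 / real n) *\<^sub>R (\<Sum>i<n. w i)"

definition l2v :: "nat \<Rightarrow> (nat \<Rightarrow> 'a::real_normed_vector) \<Rightarrow> real" where
  "l2v n w = L2_set (\<lambda>i. norm (w i)) {..<n}"

definition devv :: "nat \<Rightarrow> (nat \<Rightarrow> 'a::real_normed_vector) \<Rightarrow> real" where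
  "devv n w = l2v n (\<lambda>i. w i - avgv n w)"

lemma l2v_nonneg[simp]: "0 \<le> l2v n w"
  by (simp add: l2v_def)

lemma devv_nonneg[simp]: "0 \<le> devv n w"
  by (simp add: devv_def)

lemma l2v_mono:
  assumes "\<And>i. i < n \<Longrightarrow> norm (p i) \<le> norm (q i)"
  shows "l2v n p \<le> l2v n q"
  unfolding l2v_def by (rule L2_set_mono) (use assms in auto)

lemma l2v_triangle: "l2v n (\<lambda>i. p i + q i) \<le> l2v n p + l2v n q"
proof -
  have "l2v n (\<lambda>i. p i + q i) \<le> L2_set (\<lambda>i. norm (p i) + norm (q i)) {..<n}"
    unfolding l2v_def by (rule L2_set_mono) (auto intro: norm_triangle_ineq)
  also have "\<dots> \<le> l2v n p + l2v n q"
    unfolding l2v_def by (rule L2_set_triangle_ineq)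
  finally show ?thesis .
qed

lemma l2v_scale: "l2v n (\<lambda>i. a *\<^sub>R p i) = \<bar>a\<bar> * l2v n p"
  unfolding l2v_def by (simp add: L2_set_right_distrib)

lemma l2v_diff: "l2v n (\<lambda>i. p i - q i) \<le> l2v n p + l2v n q"
  using l2v_triangle[of n p "\<lambda>i. - q i"] l2v_scale[of n "-1" q] by simp

lemma l2v_const_bound:
  assumes "\<And>i. i < n \<Longrightarrow> norm (p i) \<le> b"
  shows "l2v n p \<le> sqrt (real n) * b"
proof -
  have "l2v n p \<le> L2_set (\<lambda>i. b) {..<n}"
    unfolding l2v_def by (rule L2_set_mono) (use assms in auto)
  also have "\<dots> = sqrt (real n) * \<bar>b\<bar>" by (simp add: L2_set_constant)
  finally have lb: "l2v n p \<le> sqrt (real n) * \<bar>b\<bar>" .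
  show ?thesis
  proof (cases "n = 0")
    case False
    then have "0 \<le> b" using assms[of 0] norm_ge_zero[of "p 0"] by linarith
    then show ?thesis using lb by simp
  qed (simp add: l2v_def)
qed

lemma l2v_member: "i < n \<Longrightarrow> norm (p i) \<le> l2v n p"
  unfolding l2v_def by (rule member_le_L2_set) auto

lemma sum_norm_le_l2v: "(\<Sum>i<n. norm (p i)) \<le> sqrt (real n) * l2v n p"
proof -
  have "(\<Sum>i<n. norm (p i)) = (\<Sum>i<n. \<bar>norm (p i)\<bar> * \<bar>1\<bar>)" by simp
  also have "\<dots> \<le> L2_set (\<lambda>i. norm (p i)) {..<n} * L2_set (\<lambda>i. 1) {..<n}"
    by (rule L2_set_mult_ineq)
  also have "\<dots> = sqrt (real n) * l2v n p"
    by (simp add: L2_set_constant l2v_def)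
  finally show ?thesis .
qed

lemma l2v_sq: "(l2v n p)\<^sup>2 = (\<Sum>i<n. (norm (p i))\<^sup>2)"
  unfolding l2v_def L2_set_def by (simp add: sum_nonneg)

lemma avgv_lin: "avgv n (\<lambda>i. a *\<^sub>R p i + b *\<^sub>R q i) = a *\<^sub>R avgv n p + b *\<^sub>R avgv n q"
  by (simp add: avgv_def sum.distrib scaleR_sum_right[symmetric] algebra_simps)

lemma avgv_add: "avgv n (\<lambda>i. p i + q i) = avgv n p + avgv n q"
  by (simp add: avgv_def sum.distrib algebra_simps)

lemma avgv_diff: "avgv n (\<lambda>i. p i - q i) = avgv n p - avgv n q"
  by (simp add: avgv_def sum_subtractf algebra_simps)

lemma avgv_const: "n \<ge> 1 \<Longrightarrow> avgv n (\<lambda>i. c) = c"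
  by (simp add: avgv_def scaleR_scaleR sum_constant_scaleR)

lemma sum_dev_zero: "n \<ge> 1 \<Longrightarrow> (\<Sum>i<n. p i - avgv n p) = 0"
  by (simp add: avgv_def sum_subtractf scaleR_scaleR sum_constant_scaleR)

lemma devv_lin: "devv n (\<lambda>i. a *\<^sub>R p i + b *\<^sub>R q i) \<le> \<bar>a\<bar> * devv n p + \<bar>b\<bar> * devv n q"
proof -
  have "devv n (\<lambda>i. a *\<^sub>R p i + b *\<^sub>R q i)
      = l2v n (\<lambda>i. a *\<^sub>R (p i - avgv n p) + b *\<^sub>R (q i - avgv n q))"
    unfolding devv_def avgv_lin by (simp add: algebra_simps)
  also have "\<dots> \<le> l2v n (\<lambda>i. a *\<^sub>R (p i - avgv n p)) + l2v n (\<lambda>i. b *\<^sub>R (q i - avgv n q))"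
    by (rule l2v_triangle)
  finally show ?thesis by (simp add: l2v_scale devv_def)
qed

lemma devv_add: "devv n (\<lambda>i. p i + q i) \<le> devv n p + devv n q"
  using devv_lin[of n 1 p 1 q] by simp

lemma devv_diff: "devv n (\<lambda>i. p i - q i) \<le> devv n p + devv n q"
  using devv_lin[of n 1 p "-1" q] by simp

lemma devv_member: "i < n \<Longrightarrow> norm (p i - avgv n p) \<le> devv n p"
  unfolding devv_def by (rule l2v_member)

lemma norm_add_sq: "(norm (a + b))\<^sup>2 = (norm a)\<^sup>2 + 2 * inner a b + (norm (b::'a::real_inner))\<^sup>2"
  by (simp add: power2_norm_eq_inner inner_add_left inner_add_right inner_commute)

lemma devv_le_center:
  fixes p :: "nat \<Rightarrow> 'a::real_inner"
  shows "devv n p \<le> l2v n (\<lambda>i. p i - c)"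
proof (cases "n = 0")
  case True then show ?thesis by (simp add: devv_def l2v_def)
next
  case False
  let ?m = "avgv n p"
  have "(\<Sum>i<n. (norm (p i - c))\<^sup>2)
      = (\<Sum>i<n. (norm (p i - ?m))\<^sup>2 + 2 * inner (p i - ?m) (?m - c) + (norm (?m - c))\<^sup>2)"
  proof (rule sum.cong)
    fix i
    have "p i - c = (p i - ?m) + (?m - c)" by simp
    then show "(norm (p i - c))\<^sup>2 = (norm (p i - ?m))\<^sup>2 + 2 * inner (p i - ?m) (?m - c) + (norm (?m - c))\<^sup>2"
      by (metis norm_add_sq)  
  qed simp
  also have "\<dots> = (\<Sum>i<n. (norm (p i - ?m))\<^sup>2) + 2 * inner (\<Sum>i<n. p i - ?m) (?m - c) + real n * (norm (?m - c))\<^sup>2"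
    by (simp add: sum.distrib sum_distrib_left inner_sum_left)
  also have "\<dots> \<ge> (\<Sum>i<n. (norm (p i - ?m))\<^sup>2)"
    using False by (simp add: sum_dev_zero)
  finally have "(devv n p)\<^sup>2 \<le> (l2v n (\<lambda>i. p i - c))\<^sup>2"
    by (simp add: devv_def l2v_sq)
  then show ?thesis
    by (simp add: power2_le_iff_abs_le)
qed

lemma avgv_in_convex:
  assumes "convex X" "n \<ge> 1" "\<And>i. i < n \<Longrightarrow> p i \<in> X"
  shows "avgv n p \<in> X"
proof -
  have "(\<Sum>i<n. (1 / real n) *\<^sub>R p i) \<in> X"
    by (rule convex_sum) (use assms in auto)
  then show ?thesis by (simp add: avgv_def scaleR_sum_right)
qed



lemma jensen_sq:
  fixes z :: "nat \<Rightarrow> 'a::real_inner"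
  assumes "\<And>j. j < n \<Longrightarrow> 0 \<le> a j" "(\<Sum>j<n. a j) = 1"
  shows "(norm (\<Sum>j<n. a j *\<^sub>R z j))\<^sup>2
     = (\<Sum>j<n. a j * (norm (z j))\<^sup>2) - (1/2) * (\<Sum>j<n. \<Sum>k<n. a j * a k * (norm (z j - z k))\<^sup>2)"
proof -
  have e: "(norm (z j - z k))\<^sup>2 = (norm (z j))\<^sup>2 + (norm (z k))\<^sup>2 - 2 * inner (z j) (z k)" for j k
    by (simp add: power2_norm_eq_inner inner_diff_left inner_diff_right inner_commute)
  have "(\<Sum>j<n. \<Sum>k<n. a j * a k * (norm (z j - z k))\<^sup>2)
     = (\<Sum>j<n. \<Sum>k<n. a j * a k * (norm (z j))\<^sup>2) + (\<Sum>j<n. \<Sum>k<n. a j * a k * (norm (z k))\<^sup>2)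
       - 2 * (\<Sum>j<n. \<Sum>k<n. a j * a k * inner (z j) (z k))"
    by (simp add: e algebra_simps sum.distrib sum_subtractf sum_distrib_left)
  also have "(\<Sum>j<n. \<Sum>k<n. a j * a k * (norm (z j))\<^sup>2) = (\<Sum>j<n. a j * (norm (z j))\<^sup>2)"
    using assms(2) by (simp add: sum_distrib_left[symmetric] sum_distrib_right[symmetric] mult.commute mult.left_commute)
  also have "(\<Sum>j<n. \<Sum>k<n. a j * a k * (norm (z k))\<^sup>2) = (\<Sum>j<n. a j * (norm (z j))\<^sup>2)"
    using assms(2) by (subst sum.swap) (simp add: sum_distrib_left[symmetric] sum_distrib_right[symmetric] mult.commute mult.left_commute)
  also have "(\<Sum>j<n. \<Sum>k<n. a j * a k * inner (z j) (z k)) = (norm (\<Sum>j<n. a j *\<^sub>R z j))\<^sup>2"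
    unfolding power2_norm_eq_inner inner_sum_left
    apply (simp add: inner_sum_right sum_distrib_left mult.assoc)
    apply (subst sum.swap)
    apply (simp add: inner_commute)
    done
  finally show ?thesis by linarith
qed

lemma relpow_dist:
  fixes z :: "nat \<Rightarrow> 'a::real_normed_vector"
  assumes "\<And>u v. (u, v) \<in> E \<Longrightarrow> norm (z u - z v) \<le> s"
  shows "(i, k) \<in> E ^^ m \<Longrightarrow> norm (z i - z k) \<le> real m * s"
proof (induction m arbitrary: k)
  case 0 then show ?case by simp
next
  case (Suc m)
  then obtain y where y: "(i, y) \<in> E ^^ m" "(y, k) \<in> E" by auto
  have "norm (z i - z k) \<le> norm (z i - z y) + norm (z y - z k)"
    using norm_triangle_ineq[of "z i - z y" "z y - z k"] by simp
  also have "\<dots> \<le> real m * s + s" using Suc.IH[OF y(1)] assms[OF y(2)] by simp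
  finally show ?case by (simp add: algebra_simps)
qed

lemma mix_avg:
  fixes w :: "nat \<Rightarrow> 'a::real_vector"
  assumes "\<And>j. j < n \<Longrightarrow> (\<Sum>i<n. a i j) = 1"
  shows "avgv n (\<lambda>i. \<Sum>j<n. a i j *\<^sub>R w j) = avgv n w"
proof -
  have "(\<Sum>i<n. \<Sum>j<n. a i j *\<^sub>R w j) = (\<Sum>j<n. (\<Sum>i<n. a i j) *\<^sub>R w j)"
    by (subst sum.swap) (simp add: scaleR_sum_left)
  also have "\<dots> = (\<Sum>j<n. w j)" using assms by simp
  finally show ?thesis by (simp add: avgv_def)
qed

lemma mix_contract_sq:
  fixes w :: "nat \<Rightarrow> 'a::real_inner" and a :: "nat \<Rightarrow> nat \<Rightarrow> real"
  assumes n1: "n \<ge> 1" and Esub: "E \<subseteq> {..<n} \<times> {..<n}" and sc: "strongly_connected n E"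
    and nonneg: "\<And>i j. i < n \<Longrightarrow> j < n \<Longrightarrow> 0 \<le> a i j"
    and supp: "\<And>i j. i < n \<Longrightarrow> j < n \<Longrightarrow> (j, i) \<in> E \<or> j = i \<Longrightarrow> \<zeta> < a i j"
    and zeta: "\<zeta> > 0"
    and rows: "\<And>i. i < n \<Longrightarrow> (\<Sum>j<n. a i j) = 1"
    and cols: "\<And>j. j < n \<Longrightarrow> (\<Sum>i<n. a i j) = 1"
  shows "(devv n (\<lambda>i. \<Sum>j<n. a i j *\<^sub>R w j))\<^sup>2 \<le> (1 - \<zeta>\<^sup>2 / (2 * real n ^ 5)) * (devv n w)\<^sup>2"
proof -
  define m where "m = avgv n w"
  define z where "z j = w j - m" for j
  have zsum: "(\<Sum>j<n. z j) = 0" unfolding z_def m_def using sum_dev_zero[OF n1, of w] by simp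
  have mixz: "(\<Sum>j<n. a i j *\<^sub>R w j) - m = (\<Sum>j<n. a i j *\<^sub>R z j)" if "i < n" for i
  proof -
    have "(\<Sum>j<n. a i j *\<^sub>R z j) = (\<Sum>j<n. a i j *\<^sub>R w j) - (\<Sum>j<n. a i j) *\<^sub>R m"
      by (simp add: z_def scaleR_diff_right sum_subtractf scaleR_sum_left)
    then show ?thesis using rows[OF that] by simp
  qed
  have av: "avgv n (\<lambda>i. \<Sum>j<n. a i j *\<^sub>R w j) = m" using mix_avg[where w=w, OF cols] m_def by simp
  have lhs: "(devv n (\<lambda>i. \<Sum>j<n. a i j *\<^sub>R w j))\<^sup>2 = (\<Sum>i<n. (norm (\<Sum>j<n. a i j *\<^sub>R z j))\<^sup>2)"
    unfolding devv_def l2v_sq av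
    by (rule sum.cong) (simp_all add: mixz)
  have rhs: "(devv n w)\<^sup>2 = (\<Sum>i<n. (norm (z i))\<^sup>2)"
    unfolding devv_def l2v_sq z_def m_def by simp
  define D where "D = (\<Sum>i<n. \<Sum>j<n. a i j * a i i * (norm (z j - z i))\<^sup>2)"
  have step1: "(norm (\<Sum>j<n. a i j *\<^sub>R z j))\<^sup>2
      \<le> (\<Sum>j<n. a i j * (norm (z j))\<^sup>2) - (1/2) * (\<Sum>j<n. a i j * a i i * (norm (z j - z i))\<^sup>2)"
    if i: "i < n" for i
  proof -
    have "(\<Sum>j<n. a i j * a i i * (norm (z j - z i))\<^sup>2) \<le> (\<Sum>j<n. \<Sum>k<n. a i j * a i k * (norm (z j - z k))\<^sup>2)"
    proof (rule sum_mono)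
      fix j assume j: "j \<in> {..<n}"
      have "a i j * a i i * (norm (z j - z i))\<^sup>2 = (\<Sum>k\<in>{i}. a i j * a i k * (norm (z j - z k))\<^sup>2)" by simp
      also have "\<dots> \<le> (\<Sum>k<n. a i j * a i k * (norm (z j - z k))\<^sup>2)"
        by (rule sum_mono2) (use i j nonneg in auto)
      finally show "a i j * a i i * (norm (z j - z i))\<^sup>2 \<le> (\<Sum>k<n. a i j * a i k * (norm (z j - z k))\<^sup>2)" .
    qed
    then show ?thesis using jensen_sq[of n "a i" z, OF nonneg[OF i] rows[OF i]] by linarith
  qed
  have colsum: "(\<Sum>i<n. \<Sum>j<n. a i j * (norm (z j))\<^sup>2) = (\<Sum>j<n. (norm (z j))\<^sup>2)"
    by (subst sum.swap) (simp add: sum_distrib_right[symmetric] cols)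
  have A: "(devv n (\<lambda>i. \<Sum>j<n. a i j *\<^sub>R w j))\<^sup>2 \<le> (\<Sum>j<n. (norm (z j))\<^sup>2) - D / 2"
  proof -
    have "(\<Sum>i<n. (norm (\<Sum>j<n. a i j *\<^sub>R z j))\<^sup>2)
        \<le> (\<Sum>i<n. (\<Sum>j<n. a i j * (norm (z j))\<^sup>2) - (1/2) * (\<Sum>j<n. a i j * a i i * (norm (z j - z i))\<^sup>2))"
    proof (rule sum_mono)
      fix i assume "i \<in> {..<n}"
      then show "(norm (\<Sum>j<n. a i j *\<^sub>R z j))\<^sup>2 \<le> (\<Sum>j<n. a i j * (norm (z j))\<^sup>2) - (1/2) * (\<Sum>j<n. a i j * a i i * (norm (z j - z i))\<^sup>2)"
        using step1[of i] by simp
    qed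
    also have "\<dots> = (\<Sum>j<n. (norm (z j))\<^sup>2) - D / 2"
      by (simp add: sum_subtractf colsum D_def sum_divide_distrib)
    finally show ?thesis using lhs by simp
  qed
  have Dnn: "0 \<le> (\<Sum>j<n. a i j * a i i * (norm (z j - z i))\<^sup>2)" if "i < n" for i
  proof (intro sum_nonneg)
    fix j assume "j \<in> {..<n}"
    then show "0 \<le> a i j * a i i * (norm (z j - z i))\<^sup>2" using that nonneg[of i j] nonneg[of i i] by simp
  qed
  have D0: "0 \<le> D" unfolding D_def by (intro sum_nonneg Dnn) simp
  define s where "s = sqrt D / \<zeta>"
  have edge: "norm (z u - z v) \<le> s" if uv: "(u, v) \<in> E" for u v
  proof -
    have u: "u < n" and v: "v < n" using uv Esub by auto
    have avu: "\<zeta> < a v u" and avv: "\<zeta> < a v v" using supp[OF v u] supp[OF v v] uv by auto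
    have "\<zeta>\<^sup>2 * (norm (z u - z v))\<^sup>2 \<le> a v u * a v v * (norm (z u - z v))\<^sup>2"
    proof (rule mult_right_mono)
      show "\<zeta>\<^sup>2 \<le> a v u * a v v" unfolding power2_eq_square
        using avu avv zeta by (intro mult_mono) auto
    qed simp
    also have "\<dots> = (\<Sum>j\<in>{u}. a v j * a v v * (norm (z j - z v))\<^sup>2)" by simp
    also have "\<dots> \<le> (\<Sum>j<n. a v j * a v v * (norm (z j - z v))\<^sup>2)"
      by (rule sum_mono2) (use u v nonneg in auto)
    also have "\<dots> = (\<Sum>i\<in>{v}. \<Sum>j<n. a i j * a i i * (norm (z j - z i))\<^sup>2)" by simp
    also have "\<dots> \<le> D" unfolding D_def
      by (rule sum_mono2) (use v Dnn in auto)
    finally have "(\<zeta> * norm (z u - z v))\<^sup>2 \<le> (sqrt D)\<^sup>2" using D0 by (simp add: power_mult_distrib)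
    then have "\<zeta> * norm (z u - z v) \<le> sqrt D"
      by (rule power2_le_imp_le) (use D0 in simp)
    then show ?thesis unfolding s_def using zeta by (simp add: field_simps)
  qed
  have finE: "finite E" using Esub finite_subset by blast
  have cardE: "card E \<le> n * n"
    using card_mono[OF _ Esub] by simp
  have s0: "0 \<le> s" unfolding s_def using zeta D0 by simp
  have pair: "norm (z i - z k) \<le> real n ^ 2 * s" if "i < n" "k < n" for i k
  proof -
    have "(i, k) \<in> E\<^sup>*" using sc that unfolding strongly_connected_def by auto
    then obtain mm where mm: "mm \<le> card E" "(i, k) \<in> E ^^ mm"
      using rtrancl_finite_eq_relpow[OF finE] by auto
    have "norm (z i - z k) \<le> real mm * s" by (rule relpow_dist[OF edge mm(2)])
    also have "\<dots> \<le> real n ^ 2 * s"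
      using mm(1) cardE s0 by (intro mult_right_mono) (simp_all add: power2_eq_square, 
         metis of_nat_le_iff of_nat_mult le_trans)
    finally show ?thesis .
  qed
  have single: "norm (z i) \<le> real n ^ 2 * s" if i: "i < n" for i
  proof -
    have "(\<Sum>k<n. z i - z k) = real n *\<^sub>R z i"
      by (simp add: sum_subtractf zsum sum_constant_scaleR)
    then have "z i = (1 / real n) *\<^sub>R (\<Sum>k<n. z i - z k)" using n1 by simp
    then have "norm (z i) = (1 / real n) * norm (\<Sum>k<n. z i - z k)" by (metis norm_scaleR abs_of_nonneg
        divide_nonneg_nonneg of_nat_0_le_iff zero_le_one)
    also have "\<dots> \<le> (1 / real n) * (\<Sum>k<n. norm (z i - z k))"
      by (intro mult_left_mono norm_sum) simp
    also have "\<dots> \<le> (1 / real n) * (\<Sum>k<n. real n ^ 2 * s)"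
      by (intro mult_left_mono sum_mono pair i) auto
    also have "\<dots> = real n ^ 2 * s" using n1 by simp
    finally show ?thesis .
  qed
  have "(\<Sum>j<n. (norm (z j))\<^sup>2) \<le> (\<Sum>j<n. (real n ^ 2 * s)\<^sup>2)"
    by (intro sum_mono power_mono single) auto
  also have "\<dots> = real n ^ 5 * (D / \<zeta>\<^sup>2)"
  proof -
    have ss: "s\<^sup>2 = D / \<zeta>\<^sup>2" unfolding s_def using D0 by (simp add: power_divide)
    have "(\<Sum>j<n. (real n ^ 2 * s)\<^sup>2) = real n * ((real n ^ 2)\<^sup>2 * s\<^sup>2)" by (simp add: power_mult_distrib)
    also have "\<dots> = real n ^ 5 * s\<^sup>2" by (simp add: power2_eq_square power_def)
    finally show ?thesis using ss by simp
  qed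
  finally have B: "(\<Sum>j<n. (norm (z j))\<^sup>2) * \<zeta>\<^sup>2 / real n ^ 5 \<le> D"
    using n1 zeta by (simp add: field_simps)
  have "(1 - \<zeta>\<^sup>2 / (2 * real n ^ 5)) * (\<Sum>j<n. (norm (z j))\<^sup>2)
      = (\<Sum>j<n. (norm (z j))\<^sup>2) - ((\<Sum>j<n. (norm (z j))\<^sup>2) * \<zeta>\<^sup>2 / real n ^ 5) / 2"
    by (simp add: field_simps)
  also have "\<dots> \<ge> (\<Sum>j<n. (norm (z j))\<^sup>2) - D / 2" using B by simp
  finally show ?thesis using A rhs by simp
qed



lemma convex_tangent:
  fixes f :: "'a::real_inner \<Rightarrow> real"
  assumes cf: "convex_on X f" and cX: "convex X"
    and der: "(f has_derivative (\<lambda>h. inner g h)) (at z within X)"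
    and z: "z \<in> X" and p: "p \<in> X"
  shows "f z + inner g (p - z) \<le> f p"
proof (cases "p = z")
  case True then show ?thesis by simp
next
  case False
  define N where "N = norm (p - z)"
  have N: "N > 0" using False by (simp add: N_def)
  have "inner g (p - z) \<le> f p - f z + e" if e: "e > 0" for e
  proof -
    have "e / N > 0" using e N by simp
    then obtain d where d: "d > 0" and dd: "\<And>y. y \<in> X \<Longrightarrow> norm (y - z) < d \<Longrightarrow>
        norm (f y - f z - inner g (y - z)) \<le> e / N * norm (y - z)"
      using der unfolding has_derivative_within_alt by blast
    define s where "s = min (1/2) (d / (2 * N))"
    have s0: "s > 0" and s1: "s \<le> 1" using d N by (auto simp: s_def)
    define y where "y = (1 - s) *\<^sub>R z + s *\<^sub>R p"
    have yX: "y \<in> X" unfolding y_def using cX z p s0 s1 by (simp add: convex_alt)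
    have yz: "y - z = s *\<^sub>R (p - z)" unfolding y_def by (simp add: algebra_simps)
    have nyz: "norm (y - z) = s * N" using s0 by (simp add: yz N_def)
    have "s * N \<le> d / 2" using N s0 by (simp add: s_def min_def field_simps split: if_splits)
    then have "norm (y - z) < d" using nyz d by simp
    have h: "norm (f y - f z - inner g (y - z)) \<le> e / N * norm (y - z)" by (rule dd[OF yX \<open>norm (y - z) < d\<close>])
    have ig: "inner g (y - z) = s * inner g (p - z)" by (simp add: yz)
    have "e / N * norm (y - z) = e * s" using N by (simp add: nyz)
    then have "\<bar>f y - f z - s * inner g (p - z)\<bar> \<le> e * s" using h ig by simp
    then have "s * inner g (p - z) \<le> f y - f z + e * s" by simp
    also have "f y \<le> (1 - s) * f z + s * f p"
      unfolding y_def by (rule convex_onD[OF cf]) (use s0 s1 z p in auto)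
    finally have "s * inner g (p - z) \<le> s * (f p - f z + e)" by (simp add: algebra_simps)
    then show ?thesis using s0 by simp
  qed
  then have "inner g (p - z) \<le> f p - f z" by (rule field_le_epsilon)
  then show ?thesis by simp
qed

locale proj =
  fixes X :: "'a::euclidean_space set" and c :: 'a and r :: real and Bs :: "'a set"
  assumes cX: "c \<in> X" and r0: "r > 0" and cball_sub: "cball c r \<inter> affine hull X \<subseteq> X"
    and Bs_orth: "pairwise orthogonal Bs" and Bs_norm: "\<And>b. b \<in> Bs \<Longrightarrow> norm b = 1"
    and Bs_fin: "finite Bs" and Bs_span: "span Bs = span ((\<lambda>x. x - c) ` X)"
begin

definition Pj :: "'a \<Rightarrow> 'a" where
  "Pj g = (\<Sum>b\<in>Bs. inner g b *\<^sub>R b)"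

lemma Pj_add: "Pj (x + y) = Pj x + Pj y"
  by (simp add: Pj_def inner_add_left scaleR_add_left sum.distrib)

lemma Pj_diff: "Pj (x - y) = Pj x - Pj y"
  by (simp add: Pj_def inner_diff_left scaleR_diff_left sum_subtractf)

lemma Pj_scale: "Pj (a *\<^sub>R x) = a *\<^sub>R Pj x"
  by (simp add: Pj_def scaleR_sum_right)

lemma Pj_sum: "Pj (\<Sum>j\<in>J. f j) = (\<Sum>j\<in>J. Pj (f j))"
  unfolding Pj_def inner_sum_left scaleR_sum_left by (rule sum.swap)

lemma Pj_mix: "Pj (\<Sum>j\<in>J. a j *\<^sub>R f j) = (\<Sum>j\<in>J. a j *\<^sub>R Pj (f j))"
  by (simp add: Pj_sum Pj_scale)

lemma Pj_span: "Pj g \<in> span Bs"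
  unfolding Pj_def by (intro span_sum span_scale span_base)

lemma Pj_orth: "b \<in> Bs \<Longrightarrow> inner (g - Pj g) b = 0"
proof -
  assume b: "b \<in> Bs"
  have "inner (Pj g) b = (\<Sum>b'\<in>Bs. inner g b' * inner b' b)"
    by (simp add: Pj_def inner_sum_left)
  also have "\<dots> = (\<Sum>b'\<in>{b}. inner g b' * inner b' b)"
  proof (rule sum.mono_neutral_right)
    show "\<forall>i\<in>Bs - {b}. inner g i * inner i b = 0"
      using Bs_orth b unfolding pairwise_def orthogonal_def by auto
  qed (use Bs_fin b in auto)
  also have "\<dots> = inner g b"
    using Bs_norm[OF b] by (simp add: inner_commute flip: power2_norm_eq_inner)
  finally show ?thesis by (simp add: inner_diff_left)
qed

lemma inner_Pj: "d \<in> span Bs \<Longrightarrow> inner (Pj g) d = inner g d"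
proof -
  assume d: "d \<in> span Bs"
  have "orthogonal (g - Pj g) d"
    by (rule orthogonal_to_span[OF d]) (simp add: orthogonal_def Pj_orth)
  then show ?thesis by (simp add: orthogonal_def inner_diff_left)
qed

lemma diff_span: "x \<in> X \<Longrightarrow> y \<in> X \<Longrightarrow> x - y \<in> span Bs"
proof -
  assume x: "x \<in> X" and y: "y \<in> X"
  have "x - c \<in> span Bs" "y - c \<in> span Bs"
    using x y by (auto simp: Bs_span intro: span_base)
  then have "(x - c) - (y - c) \<in> span Bs" by (rule span_diff)
  then show ?thesis by simp
qed

lemma ball_in: "u \<in> span Bs \<Longrightarrow> norm u \<le> r \<Longrightarrow> c + u \<in> X"
proof -
  assume u: "u \<in> span Bs" and nu: "norm u \<le> r"
  have "c \<in> affine hull X" using cX by (simp add: hull_inc)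
  then have ah: "affine hull X = (\<lambda>x. c + x) ` span ((\<lambda>x. - c + x) ` X)"
    by (rule affine_hull_span_gen)
  have "(\<lambda>x. - c + x) ` X = (\<lambda>x. x - c) ` X" by (simp add: algebra_simps)
  then have "c + u \<in> affine hull X" using u unfolding ah Bs_span by auto
  moreover have "c + u \<in> cball c r" using nu by (simp add: dist_norm)
  ultimately show ?thesis using cball_sub by auto
qed

lemma norm_Pj_inner: "Pj g \<noteq> 0 \<Longrightarrow> inner g (Pj g /\<^sub>R norm (Pj g)) = norm (Pj g)"
proof -
  assume nz: "Pj g \<noteq> 0"
  have "inner g (Pj g /\<^sub>R norm (Pj g)) = inner (Pj g) (Pj g /\<^sub>R norm (Pj g))"
    by (rule inner_Pj[symmetric]) (simp add: Pj_span span_scale)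
  also have "\<dots> = (norm (Pj g))\<^sup>2 / norm (Pj g)"
    by (simp add: power2_norm_eq_inner divide_inverse_commute)
  also have "\<dots> = norm (Pj g)" using nz by (simp add: power2_eq_square)
  finally show ?thesis .
qed

end



locale gfun = proj X c r Bs for X :: "'a::euclidean_space set" and c r Bs +
  fixes f :: "'a \<Rightarrow> real" and gr :: "'a \<Rightarrow> 'a" and L G M :: real
  assumes cvx: "convex X" and cf: "convex_on X f"
    and der: "\<And>y. y \<in> X \<Longrightarrow> (f has_derivative (\<lambda>h. inner (gr y) h)) (at y within X)"
    and lip: "\<And>y z. y \<in> X \<Longrightarrow> z \<in> X \<Longrightarrow> \<bar>f y - f z\<bar> \<le> L * norm (y - z)"
    and smooth: "\<And>y z. y \<in> X \<Longrightarrow> z \<in> X \<Longrightarrow> f y - f z \<le> inner (gr z) (y - z) + G / 2 * (norm (y - z))\<^sup>2"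
    and diam: "\<And>y z. y \<in> X \<Longrightarrow> z \<in> X \<Longrightarrow> norm (y - z) \<le> M"
begin

definition "Bd = (2 * \<bar>L\<bar> * M + \<bar>G\<bar> * M\<^sup>2 / 2) / r"
definition "Lg = \<bar>G\<bar> * (1 + M\<^sup>2 / r\<^sup>2) + 2 * Bd / r"

lemma M0: "0 \<le> M" using diam[OF cX cX] by simp

lemma Bd0: "0 \<le> Bd" unfolding Bd_def using M0 r0 by simp

lemma Lg0: "0 \<le> Lg" unfolding Lg_def using Bd0 r0 by simp

lemma tangent: "y \<in> X \<Longrightarrow> p \<in> X \<Longrightarrow> f y + inner (gr y) (p - y) \<le> f p"
  by (rule convex_tangent[OF cf cvx der])

lemma lipM: "y \<in> X \<Longrightarrow> z \<in> X \<Longrightarrow> f y - f z \<le> \<bar>L\<bar> * M"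
proof -
  assume y: "y \<in> X" and z: "z \<in> X"
  have "f y - f z \<le> L * norm (y - z)" using lip[OF y z] by simp
  also have "\<dots> \<le> \<bar>L\<bar> * norm (y - z)" by (simp add: mult_right_mono)
  also have "\<dots> \<le> \<bar>L\<bar> * M" using diam[OF y z] by (simp add: mult_left_mono)
  finally show ?thesis .
qed

lemma sqM: "y \<in> X \<Longrightarrow> z \<in> X \<Longrightarrow> G / 2 * (norm (y - z))\<^sup>2 \<le> \<bar>G\<bar> / 2 * M\<^sup>2"
proof -
  assume y: "y \<in> X" and z: "z \<in> X"
  have "G / 2 * (norm (y - z))\<^sup>2 \<le> \<bar>G\<bar> / 2 * (norm (y - z))\<^sup>2" by (simp add: mult_right_mono)
  also have "\<dots> \<le> \<bar>G\<bar> / 2 * M\<^sup>2" using diam[OF y z] by (intro mult_left_mono power_mono) auto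
  finally show ?thesis .
qed

lemma three_point:
  assumes y: "y \<in> X" and z: "z \<in> X" and p: "p \<in> X"
  shows "inner (gr y - gr z) (p - z) \<le> \<bar>G\<bar> / 2 * ((norm (y - z))\<^sup>2 + (norm (p - z))\<^sup>2)"
proof -
  have t: "f y + inner (gr y) (p - y) \<le> f p" by (rule tangent[OF y p])
  have a1: "f p - f z \<le> inner (gr z) (p - z) + G / 2 * (norm (p - z))\<^sup>2" by (rule smooth[OF p z])
  have a2: "f z - f y \<le> inner (gr y) (z - y) + G / 2 * (norm (z - y))\<^sup>2" by (rule smooth[OF z y])
  have "inner (gr y) (p - y) - inner (gr y) (z - y) = inner (gr y) (p - z)"
    by (simp add: inner_diff_right)
  moreover have "norm (z - y) = norm (y - z)" by (rule norm_minus_commute)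
  ultimately have "inner (gr y) (p - z) - inner (gr z) (p - z) \<le> G / 2 * ((norm (y - z))\<^sup>2 + (norm (p - z))\<^sup>2)"
    using t a1 a2 by (simp add: algebra_simps)
  also have "\<dots> \<le> \<bar>G\<bar> / 2 * ((norm (y - z))\<^sup>2 + (norm (p - z))\<^sup>2)" by (simp add: mult_right_mono)
  finally show ?thesis by (simp add: inner_diff_left)
qed

lemma grad_bound:
  assumes z: "z \<in> X"
  shows "norm (Pj (gr z)) \<le> Bd"
proof (cases "Pj (gr z) = 0")
  case True then show ?thesis using Bd0 by simp
next
  case False
  define w where "w = Pj (gr z)"
  define u where "u = w /\<^sub>R norm w"
  have wn: "w \<noteq> 0" using False w_def by simp
  have iu: "inner (gr z) u = norm w" unfolding u_def w_def by (rule norm_Pj_inner[OF False])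
  have us: "r *\<^sub>R u \<in> span Bs" unfolding u_def w_def by (intro span_scale Pj_span)
  have nu: "norm (r *\<^sub>R u) \<le> r" using wn r0 by (simp add: u_def)
  define q where "q = c + r *\<^sub>R u"
  have qX: "q \<in> X" unfolding q_def by (rule ball_in[OF us nu])
  have "inner (gr z) (q - z) \<le> f q - f z" using tangent[OF z qX] by simp
  also have "\<dots> \<le> \<bar>L\<bar> * M" by (rule lipM[OF qX z])
  finally have A: "inner (gr z) (q - z) \<le> \<bar>L\<bar> * M" .
  have "f c - f z \<le> inner (gr z) (c - z) + G / 2 * (norm (c - z))\<^sup>2" by (rule smooth[OF cX z])
  moreover have "f z - f c \<le> \<bar>L\<bar> * M" by (rule lipM[OF z cX])
  moreover have "G / 2 * (norm (c - z))\<^sup>2 \<le> \<bar>G\<bar> / 2 * M\<^sup>2" by (rule sqM[OF cX z])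
  ultimately have B: "inner (gr z) (c - z) \<ge> - \<bar>L\<bar> * M - \<bar>G\<bar> / 2 * M\<^sup>2" by linarith
  have "inner (gr z) (q - z) = inner (gr z) (c - z) + r * norm w"
    by (simp add: q_def inner_add_right inner_diff_right iu algebra_simps)
  then have "r * norm w \<le> 2 * \<bar>L\<bar> * M + \<bar>G\<bar> * M\<^sup>2 / 2" using A B by linarith
  then show ?thesis unfolding Bd_def w_def[symmetric] using r0 by (simp add: field_simps)
qed

lemma grad_lip:
  assumes y: "y \<in> X" and z: "z \<in> X"
  shows "norm (Pj (gr y) - Pj (gr z)) \<le> Lg * norm (y - z)"
proof -
  define \<delta> where "\<delta> = norm (y - z)"
  define W where "W = gr y - gr z"
  define w where "w = Pj W"
  have wdef: "w = Pj (gr y) - Pj (gr z)" by (simp add: w_def W_def Pj_diff)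
  show ?thesis
  proof (cases "w = 0")
    case True then show ?thesis using Lg0 wdef by simp
  next
    case wn: False
    show ?thesis
    proof (cases "\<delta> > r")
      case True
      have "norm w \<le> norm (Pj (gr y)) + norm (Pj (gr z))" unfolding wdef by (rule norm_triangle_ineq4)
      also have "\<dots> \<le> 2 * Bd" using grad_bound[OF y] grad_bound[OF z] by simp
      also have "\<dots> = (2 * Bd / r) * r" using r0 by simp
      also have "\<dots> \<le> (2 * Bd / r) * \<delta>" using True Bd0 r0 by (intro mult_left_mono) auto
      also have "\<dots> \<le> Lg * \<delta>"
        unfolding Lg_def using True r0 by (intro mult_right_mono) auto
      finally show ?thesis unfolding wdef \<delta>_def .
    next
      case False
      then have dr: "\<delta> \<le> r" by simp
      have d0: "\<delta> > 0"
      proof (rule ccontr)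
        assume "\<not> \<delta> > 0"
        then have "y = z" unfolding \<delta>_def by simp
        then show False using wn wdef by simp
      qed
      define u where "u = w /\<^sub>R norm w"
      have iu: "inner W u = norm w" unfolding u_def w_def by (rule norm_Pj_inner) (use wn w_def in simp)
      have us: "r *\<^sub>R u \<in> span Bs" unfolding u_def w_def by (intro span_scale Pj_span)
      have us': "- (r *\<^sub>R u) \<in> span Bs" using us by (rule span_neg)
      have nu: "norm (r *\<^sub>R u) \<le> r" using wn r0 by (simp add: u_def)
      define q where "q = c + r *\<^sub>R u"
      define q' where "q' = c + - (r *\<^sub>R u)"
      have qX: "q \<in> X" unfolding q_def by (rule ball_in[OF us nu])
      have qX': "q' \<in> X" unfolding q'_def by (rule ball_in[OF us']) (use nu in simp)
      define \<tau> where "\<tau> = \<delta> / r"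
      have t0: "0 < \<tau>" and t1: "\<tau> \<le> 1" using d0 dr r0 by (auto simp: \<tau>_def)
      define p1 where "p1 = (1 - \<tau>) *\<^sub>R z + \<tau> *\<^sub>R q"
      define p2 where "p2 = (1 - \<tau>) *\<^sub>R y + \<tau> *\<^sub>R q'"
      have p1X: "p1 \<in> X" unfolding p1_def using cvx z qX t0 t1 by (simp add: convex_alt)
      have p2X: "p2 \<in> X" unfolding p2_def using cvx y qX' t0 t1 by (simp add: convex_alt)
      have p1z: "p1 - z = \<tau> *\<^sub>R (q - z)" by (simp add: p1_def algebra_simps)
      have p2y: "p2 - y = \<tau> *\<^sub>R (q' - y)" by (simp add: p2_def algebra_simps)
      have np1: "(norm (p1 - z))\<^sup>2 \<le> \<tau>\<^sup>2 * M\<^sup>2"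
        unfolding p1z using diam[OF qX z] t0 by (simp add: power_mult_distrib power_mono mult_left_mono)
      have np2: "(norm (p2 - y))\<^sup>2 \<le> \<tau>\<^sup>2 * M\<^sup>2"
        unfolding p2y using diam[OF qX' y] t0 by (simp add: power_mult_distrib power_mono mult_left_mono)
      have I1: "inner W (p1 - z) \<le> \<bar>G\<bar> / 2 * (\<delta>\<^sup>2 + \<tau>\<^sup>2 * M\<^sup>2)"
        using three_point[OF y z p1X] np1 unfolding W_def \<delta>_def
        by (smt (verit) abs_ge_zero divide_nonneg_nonneg mult_left_mono zero_le_numeral)
      have I2: "inner (gr z - gr y) (p2 - y) \<le> \<bar>G\<bar> / 2 * (\<delta>\<^sup>2 + \<tau>\<^sup>2 * M\<^sup>2)"
        using three_point[OF z y p2X] np2 unfolding \<delta>_def norm_minus_commute[of z y]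
        by (smt (verit) abs_ge_zero divide_nonneg_nonneg mult_left_mono zero_le_numeral)
      have "inner (gr z - gr y) (p2 - y) = \<tau> * inner W (y - q')"
        unfolding p2y W_def by (simp add: inner_diff_left inner_diff_right algebra_simps)
      moreover have "inner W (p1 - z) = \<tau> * inner W (q - z)" unfolding p1z by simp
      ultimately have S: "\<tau> * (inner W (q - z) + inner W (y - q')) \<le> \<bar>G\<bar> * (\<delta>\<^sup>2 + \<tau>\<^sup>2 * M\<^sup>2)"
        using I1 I2 by (simp add: algebra_simps)
      have e1: "inner W (q - z) + inner W (y - q') = 2 * r * inner W u + inner W (y - z)"
        by (simp add: q_def q'_def inner_add_right inner_diff_right algebra_simps)
      have e2: "inner W (y - z) = inner w (y - z)" unfolding w_def
        by (rule inner_Pj[symmetric]) (rule diff_span[OF y z])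
      have e3: "inner w (y - z) \<ge> - (norm w * \<delta>)"
        unfolding \<delta>_def using Cauchy_Schwarz_ineq2[of w "y - z"] by (simp add: abs_le_iff)
      have "inner W (q - z) + inner W (y - q') \<ge> 2 * r * norm w - norm w * \<delta>"
        using e1 e2 e3 iu by simp
      then have "\<tau> * (2 * r * norm w - norm w * \<delta>) \<le> \<bar>G\<bar> * (\<delta>\<^sup>2 + \<tau>\<^sup>2 * M\<^sup>2)"
        using S t0 by (smt (verit) mult_left_mono)
      moreover have "\<tau> * (2 * r * norm w - norm w * \<delta>) \<ge> \<delta> * norm w"
      proof -
        have "\<tau> * (2 * r * norm w - norm w * \<delta>) = \<tau> * norm w * (2 * r - \<delta>)" by (simp add: algebra_simps)
        also have "\<dots> \<ge> \<tau> * norm w * r" using dr t0 by (intro mult_left_mono) auto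
        finally show ?thesis using r0 by (simp add: \<tau>_def)
      qed
      moreover have "\<bar>G\<bar> * (\<delta>\<^sup>2 + \<tau>\<^sup>2 * M\<^sup>2) = \<delta> * (\<bar>G\<bar> * (1 + M\<^sup>2 / r\<^sup>2) * \<delta>)"
        using r0 by (simp add: \<tau>_def power_divide field_simps power2_eq_square)
      ultimately have "\<delta> * norm w \<le> \<delta> * (\<bar>G\<bar> * (1 + M\<^sup>2 / r\<^sup>2) * \<delta>)" by linarith
      then have "norm w \<le> \<bar>G\<bar> * (1 + M\<^sup>2 / r\<^sup>2) * \<delta>" using d0 by simp
      also have "\<dots> \<le> Lg * \<delta>" unfolding Lg_def using d0 Bd0 r0 by (intro mult_right_mono) auto
      finally show ?thesis unfolding wdef \<delta>_def .
    qed
  qed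
qed

end



lemma rec_sum:
  fixes a u :: "nat \<Rightarrow> real"
  assumes rec: "\<And>k. Suc k < N \<Longrightarrow> a (Suc k) \<le> lam * a k + u k"
    and a0: "\<And>k. 0 \<le> a k" and l0: "0 \<le> lam"
  shows "(1 - lam) * (\<Sum>k<N. a k) \<le> a 0 + (\<Sum>k<N - 1. u k)"
proof (cases N)
  case 0 then show ?thesis using a0[of 0] by simp
next
  case (Suc m)
  have "(\<Sum>k<N. a k) = a 0 + (\<Sum>k<m. a (Suc k))"
    unfolding Suc by (rule sum.lessThan_Suc_shift)
  also have "(\<Sum>k<m. a (Suc k)) \<le> (\<Sum>k<m. lam * a k + u k)"
    by (rule sum_mono) (use rec Suc in auto)
  also have "\<dots> = lam * (\<Sum>k<m. a k) + (\<Sum>k<m. u k)"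
    by (simp add: sum.distrib sum_distrib_left)
  also have "lam * (\<Sum>k<m. a k) \<le> lam * (\<Sum>k<N. a k)"
    unfolding Suc using a0 l0 by (intro mult_left_mono) (simp_all add: a0)
  finally show ?thesis using Suc by (simp add: algebra_simps)
qed

locale setting =
  fixes n :: nat
    and E :: "nat \<Rightarrow> (nat \<times> nat) set"
    and A :: "nat \<Rightarrow> nat \<Rightarrow> nat \<Rightarrow> real"
    and X :: "'a::euclidean_space set"
    and f :: "nat \<Rightarrow> nat \<Rightarrow> 'a \<Rightarrow> real"
    and grad :: "nat \<Rightarrow> nat \<Rightarrow> 'a \<Rightarrow> 'a"
    and xstar :: "nat \<Rightarrow> 'a"
    and x1 :: "nat \<Rightarrow> 'a"
    and \<zeta> M L G \<rho> :: real
    and c :: 'a and r :: real and Bs :: "'a set"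
  assumes n_pos: "1 \<le> n"
    and graph_edges: "\<And>t. t \<ge> 1 \<Longrightarrow> E t \<subseteq> {..<n} \<times> {..<n}"
    and A_support: "\<And>t i j. t \<ge> 1 \<Longrightarrow> i < n \<Longrightarrow> j < n \<Longrightarrow>
                      A t i j \<ge> 0 \<and> (A t i j > 0 \<longleftrightarrow> ((j, i) \<in> E t \<or> j = i))"
    and A1a: "\<zeta> > 0" "\<And>t i j. t \<ge> 1 \<Longrightarrow> i < n \<Longrightarrow> j < n \<Longrightarrow> A t i j > 0 \<Longrightarrow> A t i j > \<zeta>"
    and A1b: "\<And>t. t \<ge> 1 \<Longrightarrow> strongly_connected n (E t)"
    and A1c: "\<And>t i. t \<ge> 1 \<Longrightarrow> i < n \<Longrightarrow> (\<Sum>j<n. A t i j) = 1"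
             "\<And>t j. t \<ge> 1 \<Longrightarrow> j < n \<Longrightarrow> (\<Sum>i<n. A t i j) = 1"
    and A2: "convex X" "compact X" "\<And>y z. y \<in> X \<Longrightarrow> z \<in> X \<Longrightarrow> norm (y - z) \<le> M"
    and A3: "\<And>i t y z. i < n \<Longrightarrow> t \<ge> 1 \<Longrightarrow> y \<in> X \<Longrightarrow> z \<in> X \<Longrightarrow>
               \<bar>f i t y - f i t z\<bar> \<le> L * norm (y - z)"
    and A4: "\<And>i t y z. i < n \<Longrightarrow> t \<ge> 1 \<Longrightarrow> y \<in> X \<Longrightarrow> z \<in> X \<Longrightarrow>
               f i t y - f i t z \<le> inner (grad i t z) (y - z) + G / 2 * (norm (y - z))\<^sup>2"
    and convex_f: "\<And>i t. i < n \<Longrightarrow> t \<ge> 1 \<Longrightarrow> convex_on X (f i t)"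
    and grad_f: "\<And>i t y. i < n \<Longrightarrow> t \<ge> 1 \<Longrightarrow> y \<in> X \<Longrightarrow>
               (f i t has_derivative (\<lambda>h. inner (grad i t y) h)) (at y within X)"
    and xstar_min: "\<And>t. t \<ge> 1 \<Longrightarrow> xstar t \<in> X \<and> (\<forall>z\<in>X. Fsum n f t (xstar t) \<le> Fsum n f t z)"
    and init: "\<And>i. i < n \<Longrightarrow> x1 i \<in> X"
    and rho: "\<rho> \<ge> 1"
    and prj: "proj X c r Bs"
begin

sublocale proj X c r Bs by (rule prj)

lemma gf: "i < n \<Longrightarrow> t \<ge> 1 \<Longrightarrow> gfun X c r Bs (f i t) (grad i t) L G M"
  by unfold_locales (use A2 A3 A4 convex_f grad_f in auto)

definition "BB = (2 * \<bar>L\<bar> * M + \<bar>G\<bar> * M\<^sup>2 / 2) / r"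
definition "LL = \<bar>G\<bar> * (1 + M\<^sup>2 / r\<^sup>2) + 2 * BB / r"

lemma M0: "0 \<le> M" using A2(3)[OF cX cX] by simp
lemma BB0: "0 \<le> BB" unfolding BB_def using M0 r0 by simp
lemma LL0: "0 \<le> LL" unfolding LL_def using BB0 r0 by simp

lemma gbound: "i < n \<Longrightarrow> t \<ge> 1 \<Longrightarrow> z \<in> X \<Longrightarrow> norm (Pj (grad i t z)) \<le> BB"
proof -
  assume i: "i < n" and t: "t \<ge> 1" and z: "z \<in> X"
  show ?thesis using gfun.grad_bound[OF gf[OF i t] z] unfolding gfun.Bd_def[OF gf[OF i t]] BB_def .
qed

lemma glip: "i < n \<Longrightarrow> t \<ge> 1 \<Longrightarrow> y \<in> X \<Longrightarrow> z \<in> X \<Longrightarrow>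
    norm (Pj (grad i t y) - Pj (grad i t z)) \<le> LL * norm (y - z)"
proof -
  assume i: "i < n" and t: "t \<ge> 1" and y: "y \<in> X" and z: "z \<in> X"
  show ?thesis using gfun.grad_lip[OF gf[OF i t] y z] unfolding gfun.Lg_def[OF gf[OF i t]] gfun.Bd_def[OF gf[OF i t]] LL_def BB_def .
qed

lemma tang: "i < n \<Longrightarrow> t \<ge> 1 \<Longrightarrow> y \<in> X \<Longrightarrow> p \<in> X \<Longrightarrow> f i t y + inner (grad i t y) (p - y) \<le> f i t p"
proof -
  assume i: "i < n" and t: "t \<ge> 1" and y: "y \<in> X" and p: "p \<in> X"
  show ?thesis by (rule gfun.tangent[OF gf[OF i t] y p])
qed

definition "q0 = 1 - \<zeta>\<^sup>2 / (2 * real n ^ 5)"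
definition "lam = sqrt q0"

lemma zeta1: "\<zeta> < 1"
proof -
  have "\<zeta> < A 1 0 0" using A_support[of 1 0 0] A1a(2)[of 1 0 0] n_pos by auto
  also have "A 1 0 0 = (\<Sum>j\<in>{0}. A 1 0 j)" by simp
  also have "\<dots> \<le> (\<Sum>j<n. A 1 0 j)"
    by (rule sum_mono2) (use n_pos A_support[of 1 0] in auto)
  also have "\<dots> = 1" using A1c(1)[of 1 0] n_pos by simp
  finally show ?thesis .
qed

lemma q0_bounds: "0 \<le> q0" "q0 < 1"
proof -
  have n5: "1 \<le> real n ^ 5" using n_pos by simp
  have "\<zeta>\<^sup>2 < 1" using zeta1 A1a(1) by (simp add: power_less_one_iff abs_less_iff)
  moreover have "\<zeta>\<^sup>2 / (2 * real n ^ 5) \<le> \<zeta>\<^sup>2 / 1"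
  proof (rule divide_left_mono)
    show "1 \<le> 2 * real n ^ 5" using n5 by linarith
    show "0 < 2 * real n ^ 5 * 1" using n5 by linarith
  qed simp
  ultimately have "\<zeta>\<^sup>2 / (2 * real n ^ 5) \<le> 1" by simp
  then show "0 \<le> q0" unfolding q0_def by simp
  have "0 < \<zeta>\<^sup>2 / (2 * real n ^ 5)" using A1a(1) n5 n_pos by (intro divide_pos_pos) auto
  then show "q0 < 1" unfolding q0_def by simp
qed

lemma lam0: "0 \<le> lam" unfolding lam_def using q0_bounds by simp
lemma lam1: "lam < 1" unfolding lam_def using q0_bounds by simp

lemma mix_contract:
  fixes w :: "nat \<Rightarrow> 'b::real_inner"
  assumes t: "t \<ge> 1"
  shows "devv n (\<lambda>i. \<Sum>j<n. A t i j *\<^sub>R w j) \<le> lam * devv n w"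
proof -
  have "(devv n (\<lambda>i. \<Sum>j<n. A t i j *\<^sub>R w j))\<^sup>2 \<le> q0 * (devv n w)\<^sup>2"
    unfolding q0_def
  proof (rule mix_contract_sq[where E="E t"])
    show "\<And>i j. i < n \<Longrightarrow> j < n \<Longrightarrow> (j, i) \<in> E t \<or> j = i \<Longrightarrow> \<zeta> < A t i j"
      using A_support[OF t] A1a(2)[OF t] by blast
  qed (use n_pos graph_edges[OF t] A1b[OF t] A_support[OF t] A1a(1) A1c[OF t] in auto)
  also have "\<dots> = (lam * devv n w)\<^sup>2" unfolding lam_def using q0_bounds by (simp add: power_mult_distrib)
  finally show ?thesis using lam0 by (simp add: power2_le_iff_abs_le)
qed

lemma mix_avgA: "t \<ge> 1 \<Longrightarrow> avgv n (\<lambda>i. \<Sum>j<n. A t i j *\<^sub>R w j) = avgv n w"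
  by (rule mix_avg) (use A1c(2) in auto)

lemma mix_in: "t \<ge> 1 \<Longrightarrow> i < n \<Longrightarrow> (\<And>j. j < n \<Longrightarrow> w j \<in> X) \<Longrightarrow> (\<Sum>j<n. A t i j *\<^sub>R w j) \<in> X"
  by (rule convex_sum) (use A2(1) A1c(1) A_support in auto)

lemma dev_le_M: "(\<And>i. i < n \<Longrightarrow> w i \<in> X) \<Longrightarrow> devv n w \<le> sqrt (real n) * M"
proof -
  assume w: "\<And>i. i < n \<Longrightarrow> w i \<in> X"
  have "devv n w \<le> l2v n (\<lambda>i. w i - c)" by (rule devv_le_center)
  also have "\<dots> \<le> sqrt (real n) * M" by (rule l2v_const_bound) (use w A2(3) cX in auto)
  finally show ?thesis .
qed

definition "var t = (MAX i\<in>{..<n}. (SUP y\<in>X. \<bar>f i (Suc t) y - f i t y\<bar>))"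

lemma var_bound:
  assumes i: "i < n" and t: "t \<ge> 1" and y: "y \<in> X"
  shows "\<bar>f i (Suc t) y - f i t y\<bar> \<le> var t"
proof -
  have bdd: "bdd_above ((\<lambda>y. \<bar>f i (Suc t) y - f i t y\<bar>) ` X)"
  proof (rule bdd_aboveI2)
    fix z assume z: "z \<in> X"
    have "\<bar>f i (Suc t) z - f i (Suc t) c\<bar> \<le> L * norm (z - c)" using A3[OF i _ z cX] t by simp
    moreover have "\<bar>f i t z - f i t c\<bar> \<le> L * norm (z - c)" using A3[OF i t z cX] by simp
    moreover have "L * norm (z - c) \<le> \<bar>L\<bar> * M"
      using A2(3)[OF z cX] by (meson abs_ge_self abs_ge_zero mult_mono norm_ge_zero order_trans)
    ultimately show "\<bar>f i (Suc t) z - f i t z\<bar> \<le> \<bar>f i (Suc t) c\<bar> + \<bar>f i t c\<bar> + 2 * \<bar>L\<bar> * M"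
      by linarith
  qed
  have "\<bar>f i (Suc t) y - f i t y\<bar> \<le> (SUP y\<in>X. \<bar>f i (Suc t) y - f i t y\<bar>)"
    by (rule cSUP_upper[OF y bdd])
  also have "\<dots> \<le> var t" unfolding var_def
    by (rule Max_ge) (use i in auto)
  finally show ?thesis .
qed

lemma var0: "t \<ge> 1 \<Longrightarrow> 0 \<le> var t"
  using var_bound[of 0 t c] n_pos cX by simp

lemma H_var_eq: "H_var n X f T = (\<Sum>t\<in>{1..<T}. var t)"
  unfolding H_var_def var_def by simp

lemma H0: "0 \<le> H_var n X f T"
  unfolding H_var_eq by (rule sum_nonneg) (simp add: var0)

end



locale run = setting n E A X f grad xstar x1 \<zeta> M L G \<rho> c r Bs
  for n E A and X :: "'a::euclidean_space set" and f grad xstar x1 \<zeta> M L G \<rho> c r Bs +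
  fixes T K :: nat and \<alpha> :: real and x :: "nat \<Rightarrow> nat \<Rightarrow> 'a"
    and xk xh gb gh v :: "nat \<Rightarrow> nat \<Rightarrow> nat \<Rightarrow> 'a"
  assumes T1: "T \<ge> 1" and K1: "K \<ge> 1" and al: "\<alpha> = 1 / (\<rho> * real K)"
    and dom: "DOMFW n A grad X x1 T (\<lambda>_. K) (\<lambda>_. \<alpha>) x xk xh gb gh v"
begin

lemma x_init: "i < n \<Longrightarrow> x i 1 = x1 i"
  using dom unfolding DOMFW_def by blast

lemma dom_t: "i < n \<Longrightarrow> 1 \<le> t \<Longrightarrow> t \<le> T \<Longrightarrow> xk i t 1 = x i t \<and> x i (Suc t) = xk i t (K + 1)"
  using dom unfolding DOMFW_def by auto

lemma dom_k: "i < n \<Longrightarrow> 1 \<le> t \<Longrightarrow> t \<le> T \<Longrightarrow> 1 \<le> k \<Longrightarrow> k \<le> K \<Longrightarrow>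
   xh i t k = (\<Sum>j<n. A t i j *\<^sub>R xk j t k) \<and>
   gb i t k = (if k = 1 then grad i t (xh i t 1)
               else gh i t (k - 1) + grad i t (xh i t k) - grad i t (xh i t (k - 1))) \<and>
   gh i t k = (\<Sum>j<n. A t i j *\<^sub>R gb j t k) \<and>
   v i t k \<in> X \<and> (\<forall>z\<in>X. inner (v i t k) (gh i t k) \<le> inner z (gh i t k)) \<and>
   xk i t (Suc k) = xh i t k + \<alpha> *\<^sub>R (v i t k - xh i t k)"
proof -
  assume i: "i < n" and t: "1 \<le> t" "t \<le> T" and k: "1 \<le> k" "k \<le> K"
  from dom have "\<forall>t\<in>{1..T}. (\<forall>k\<in>{1..K}.
          xh i t k = (\<Sum>j<n. A t i j *\<^sub>R xk j t k) \<and>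
          gb i t k = (if k = 1 then grad i t (xh i t 1)
                      else gh i t (k - 1) + grad i t (xh i t k) - grad i t (xh i t (k - 1))) \<and>
          gh i t k = (\<Sum>j<n. A t i j *\<^sub>R gb j t k) \<and>
          v i t k \<in> X \<and> (\<forall>z\<in>X. inner (v i t k) (gh i t k) \<le> inner z (gh i t k)) \<and>
          xk i t (Suc k) = xh i t k + \<alpha> *\<^sub>R (v i t k - xh i t k))"
    unfolding DOMFW_def using i by blast
  moreover have "t \<in> {1..T}" "k \<in> {1..K}" using t k by auto
  ultimately show ?thesis by blast
qed

lemma dom_xh: "i < n \<Longrightarrow> 1 \<le> t \<Longrightarrow> t \<le> T \<Longrightarrow> 1 \<le> k \<Longrightarrow> k \<le> K \<Longrightarrow>
   xh i t k = (\<Sum>j<n. A t i j *\<^sub>R xk j t k)"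
  using dom_k by blast
lemma dom_gb1: "i < n \<Longrightarrow> 1 \<le> t \<Longrightarrow> t \<le> T \<Longrightarrow> 1 \<le> K \<Longrightarrow>
   gb i t 1 = grad i t (xh i t 1)"
  using dom_k[of i t 1] by simp
lemma dom_gbS: "i < n \<Longrightarrow> 1 \<le> t \<Longrightarrow> t \<le> T \<Longrightarrow> 1 \<le> k \<Longrightarrow> Suc k \<le> K \<Longrightarrow>
   gb i t (Suc k) = gh i t k + grad i t (xh i t (Suc k)) - grad i t (xh i t k)"
  using dom_k[of i t "Suc k"] by simp
lemma dom_gh: "i < n \<Longrightarrow> 1 \<le> t \<Longrightarrow> t \<le> T \<Longrightarrow> 1 \<le> k \<Longrightarrow> k \<le> K \<Longrightarrow>
   gh i t k = (\<Sum>j<n. A t i j *\<^sub>R gb j t k)"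
  using dom_k by blast
lemma dom_lmo: "i < n \<Longrightarrow> 1 \<le> t \<Longrightarrow> t \<le> T \<Longrightarrow> 1 \<le> k \<Longrightarrow> k \<le> K \<Longrightarrow> z \<in> X \<Longrightarrow>
   inner (v i t k) (gh i t k) \<le> inner z (gh i t k)"
  using dom_k by blast
lemma dom_step: "i < n \<Longrightarrow> 1 \<le> t \<Longrightarrow> t \<le> T \<Longrightarrow> 1 \<le> k \<Longrightarrow> k \<le> K \<Longrightarrow>
   xk i t (Suc k) = (1 - \<alpha>) *\<^sub>R xh i t k + \<alpha> *\<^sub>R v i t k"
proof -
  assume "i < n" "1 \<le> t" "t \<le> T" "1 \<le> k" "k \<le> K"
  then have "xk i t (Suc k) = xh i t k + \<alpha> *\<^sub>R (v i t k - xh i t k)" using dom_k by blast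
  then show ?thesis by (simp add: algebra_simps)
qed

lemma al_pos: "\<alpha> > 0" using al rho K1 by simp
lemma al_le1: "\<alpha> \<le> 1"
proof -
  have "1 \<le> \<rho> * real K" using rho K1 by (metis mult_mono' of_nat_1 of_nat_mono mult_1_right zero_le_one order_trans)
  then show ?thesis using al by simp
qed
lemma Kal: "real K * \<alpha> = 1 / \<rho>" using al K1 by simp
lemma Kal_le1: "real K * \<alpha> \<le> 1" using Kal rho by simp

lemma xk_in_aux:
  assumes t: "1 \<le> t" "t \<le> T" and xt: "\<And>i. i < n \<Longrightarrow> x i t \<in> X"
  shows "m \<le> K \<Longrightarrow> i < n \<Longrightarrow> xk i t (Suc m) \<in> X \<and> (m \<ge> 1 \<longrightarrow> xh i t m \<in> X)"
proof (induction m arbitrary: i)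
  case 0 then show ?case using dom_t[OF _ t] xt by simp
next
  case (Suc m)
  have prev: "\<And>j. j < n \<Longrightarrow> xk j t (Suc m) \<in> X" using Suc by simp
  have xh: "xh i t (Suc m) \<in> X"
    using dom_xh[OF Suc(3) t, of "Suc m"] Suc(2) mix_in[of t i "\<lambda>j. xk j t (Suc m)"] t prev Suc(3) by simp
  have vv: "v i t (Suc m) \<in> X" using dom_k[OF Suc(3) t, of "Suc m"] Suc(2) by simp
  have "xk i t (Suc (Suc m)) = (1 - \<alpha>) *\<^sub>R xh i t (Suc m) + \<alpha> *\<^sub>R v i t (Suc m)"
    using dom_step[OF Suc(3) t, of "Suc m"] Suc(2) by simp
  also have "\<dots> \<in> X" using A2(1) xh vv al_pos al_le1 by (simp add: convex_alt)
  finally show ?case using xh by simp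
qed

lemma x_in: "1 \<le> t \<Longrightarrow> t \<le> T + 1 \<Longrightarrow> i < n \<Longrightarrow> x i t \<in> X"
proof (induction t arbitrary: i rule: nat_induct_at_least)
  case base then show ?case using x_init init by simp
next
  case (Suc t)
  have "\<And>j. j < n \<Longrightarrow> x j t \<in> X" using Suc by simp
  then have "xk i t (Suc K) \<in> X" using xk_in_aux[of t K i] Suc by simp
  then show ?case using dom_t[of i t] Suc by simp
qed

lemma xk_in: "1 \<le> t \<Longrightarrow> t \<le> T \<Longrightarrow> 1 \<le> k \<Longrightarrow> k \<le> K + 1 \<Longrightarrow> i < n \<Longrightarrow> xk i t k \<in> X"
  using xk_in_aux[of t "k - 1" i] x_in by simp

lemma xh_in: "1 \<le> t \<Longrightarrow> t \<le> T \<Longrightarrow> 1 \<le> k \<Longrightarrow> k \<le> K \<Longrightarrow> i < n \<Longrightarrow> xh i t k \<in> X"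
  using xk_in_aux[of t k i] x_in by simp

lemma v_in: "1 \<le> t \<Longrightarrow> t \<le> T \<Longrightarrow> 1 \<le> k \<Longrightarrow> k \<le> K \<Longrightarrow> i < n \<Longrightarrow> v i t k \<in> X"
  using dom_k by blast

definition "yb t k = avgv n (\<lambda>i. xk i t k)"
definition "dy t k = devv n (\<lambda>i. xk i t k)"
definition "dyh t k = devv n (\<lambda>i. xh i t k)"
definition "dG t k = devv n (\<lambda>i. Pj (gh i t k))"
definition "PP t k i = Pj (grad i t (xh i t k))"
definition "vb t k = avgv n (\<lambda>i. v i t k)"
definition "hh t k = Fsum n f t (yb t k) - Fsum n f t (xstar t)"

lemma yb_in: "1 \<le> t \<Longrightarrow> t \<le> T \<Longrightarrow> 1 \<le> k \<Longrightarrow> k \<le> K + 1 \<Longrightarrow> yb t k \<in> X"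
  unfolding yb_def by (rule avgv_in_convex[OF A2(1) n_pos]) (rule xk_in)

lemma vb_in: "1 \<le> t \<Longrightarrow> t \<le> T \<Longrightarrow> 1 \<le> k \<Longrightarrow> k \<le> K \<Longrightarrow> vb t k \<in> X"
  unfolding vb_def by (rule avgv_in_convex[OF A2(1) n_pos]) (rule v_in)

lemma S1:
  assumes t: "1 \<le> t" "t \<le> T" and k: "1 \<le> k" "k \<le> K"
  shows "avgv n (\<lambda>i. xh i t k) = yb t k" "dyh t k \<le> lam * dy t k"
proof -
  have e: "(\<lambda>i. xh i t k) = (\<lambda>i. if i < n then (\<Sum>j<n. A t i j *\<^sub>R xk j t k) else xh i t k)"
    using dom_k[OF _ t k] by auto
  have av: "avgv n (\<lambda>i. xh i t k) = avgv n (\<lambda>i. \<Sum>j<n. A t i j *\<^sub>R xk j t k)"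
    unfolding avgv_def using dom_k[OF _ t k] by simp
  then show "avgv n (\<lambda>i. xh i t k) = yb t k"
    unfolding yb_def using mix_avgA t by simp
  have "dyh t k = devv n (\<lambda>i. \<Sum>j<n. A t i j *\<^sub>R xk j t k)"
    unfolding dyh_def devv_def l2v_def av
    by (rule L2_set_cong) (use dom_k[OF _ t k] in auto)
  also have "\<dots> \<le> lam * dy t k" unfolding dy_def by (rule mix_contract) (use t in simp)
  finally show "dyh t k \<le> lam * dy t k" .
qed

end



lemma avgv_cong: "(\<And>i. i < n \<Longrightarrow> p i = q i) \<Longrightarrow> avgv n p = avgv n q"
  unfolding avgv_def by simp

lemma l2v_cong: "(\<And>i. i < n \<Longrightarrow> p i = q i) \<Longrightarrow> l2v n p = l2v n q"
  unfolding l2v_def by (rule L2_set_cong) auto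

lemma devv_cong: "(\<And>i. i < n \<Longrightarrow> p i = q i) \<Longrightarrow> devv n p = devv n q"
proof -
  assume h: "\<And>i. i < n \<Longrightarrow> p i = q i"
  then have "avgv n p = avgv n q" by (rule avgv_cong)
  then show ?thesis unfolding devv_def using h by (intro l2v_cong) auto
qed

context run
begin

lemma S2:
  assumes t: "1 \<le> t" "t \<le> T" and k: "1 \<le> k" "k \<le> K"
  shows "yb t (Suc k) = yb t k + \<alpha> *\<^sub>R (vb t k - yb t k)"
    "dy t (Suc k) \<le> lam * dy t k + \<alpha> * sqrt (real n) * M"
proof -
  have st: "\<And>i. i < n \<Longrightarrow> xk i t (Suc k) = (1 - \<alpha>) *\<^sub>R xh i t k + \<alpha> *\<^sub>R v i t k"
    using dom_step t k by blast
  have "yb t (Suc k) = avgv n (\<lambda>i. (1 - \<alpha>) *\<^sub>R xh i t k + \<alpha> *\<^sub>R v i t k)"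
    unfolding yb_def by (rule avgv_cong) (rule st)
  also have "\<dots> = (1 - \<alpha>) *\<^sub>R yb t k + \<alpha> *\<^sub>R vb t k"
    unfolding avgv_lin S1(1)[OF t k] vb_def ..
  finally show "yb t (Suc k) = yb t k + \<alpha> *\<^sub>R (vb t k - yb t k)" by (simp add: algebra_simps)
  have "dy t (Suc k) = devv n (\<lambda>i. (1 - \<alpha>) *\<^sub>R xh i t k + \<alpha> *\<^sub>R v i t k)"
    unfolding dy_def by (rule devv_cong) (rule st)
  also have "\<dots> \<le> \<bar>1 - \<alpha>\<bar> * dyh t k + \<bar>\<alpha>\<bar> * devv n (\<lambda>i. v i t k)"
    unfolding dyh_def by (rule devv_lin)
  also have "\<dots> \<le> 1 * (lam * dy t k) + \<alpha> * (sqrt (real n) * M)"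
  proof (rule add_mono)
    show "\<bar>1 - \<alpha>\<bar> * dyh t k \<le> 1 * (lam * dy t k)"
      using S1(2)[OF t k] al_pos al_le1 by (intro mult_mono) (auto simp: dyh_def)
    show "\<bar>\<alpha>\<bar> * devv n (\<lambda>i. v i t k) \<le> \<alpha> * (sqrt (real n) * M)"
      using al_pos dev_le_M[of "\<lambda>i. v i t k"] v_in[OF t k] by (simp add: mult_left_mono)
  qed
  finally show "dy t (Suc k) \<le> lam * dy t k + \<alpha> * sqrt (real n) * M" by simp
qed

definition "Dc = \<alpha> * sqrt (real n) * M / (1 - lam)"

lemma Dc0: "0 \<le> Dc" unfolding Dc_def using al_pos M0 lam1 by simp

lemma C2:
  assumes t: "1 \<le> t" "t \<le> T"
  shows "k \<le> K \<Longrightarrow> dy t (Suc k) \<le> lam ^ k * dy t 1 + Dc"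
proof (induction k)
  case 0 then show ?case using Dc0 by simp
next
  case (Suc k)
  have "dy t (Suc (Suc k)) \<le> lam * dy t (Suc k) + \<alpha> * sqrt (real n) * M"
    using S2(2)[OF t, of "Suc k"] Suc by simp
  also have "\<dots> \<le> lam * (lam ^ k * dy t 1 + Dc) + \<alpha> * sqrt (real n) * M"
    using Suc lam0 by (intro add_right_mono mult_left_mono) auto
  also have "\<alpha> * sqrt (real n) * M = (1 - lam) * Dc" unfolding Dc_def using lam1 by simp
  finally show ?case by (simp add: algebra_simps)
qed

lemma C2K:
  assumes t: "1 \<le> t" "t \<le> T"
  shows "dy t (Suc K) \<le> lam * dy t 1 + Dc"
proof -
  have "dy t (Suc K) \<le> lam ^ K * dy t 1 + Dc" by (rule C2[OF t]) simp
  also have "lam ^ K \<le> lam ^ 1" using K1 lam0 lam1 by (intro power_decreasing) auto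
  then have "lam ^ K * dy t 1 \<le> lam * dy t 1" by (simp add: mult_right_mono dy_def)
  finally show ?thesis by simp
qed

lemma gh_mix:
  assumes t: "1 \<le> t" "t \<le> T" and k: "1 \<le> k" "k \<le> K" and i: "i < n"
  shows "Pj (gh i t k) = (\<Sum>j<n. A t i j *\<^sub>R Pj (gb j t k))"
  using dom_gh[OF i t k] by (simp add: Pj_mix)

lemma TR1:
  assumes t: "1 \<le> t" "t \<le> T"
  shows "Suc m \<le> K \<Longrightarrow> avgv n (\<lambda>i. Pj (gh i t (Suc m))) = avgv n (PP t (Suc m))"
proof (induction m)
  case 0
  have "avgv n (\<lambda>i. Pj (gh i t 1)) = avgv n (\<lambda>i. \<Sum>j<n. A t i j *\<^sub>R Pj (gb j t 1))"
    by (rule avgv_cong) (rule gh_mix[OF t _ _ ], use 0 in auto)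
  also have "\<dots> = avgv n (\<lambda>j. Pj (gb j t 1))" by (rule mix_avgA) (use t in simp)
  also have "\<dots> = avgv n (PP t 1)"
    by (rule avgv_cong) (use dom_gb1 t 0 in \<open>simp add: PP_def\<close>)
  finally show ?case by simp
next
  case (Suc m)
  have "avgv n (\<lambda>i. Pj (gh i t (Suc (Suc m)))) = avgv n (\<lambda>i. \<Sum>j<n. A t i j *\<^sub>R Pj (gb j t (Suc (Suc m))))"
    by (rule avgv_cong) (rule gh_mix[OF t _ _ ], use Suc in auto)
  also have "\<dots> = avgv n (\<lambda>j. Pj (gb j t (Suc (Suc m))))" by (rule mix_avgA) (use t in simp)
  also have "\<dots> = avgv n (\<lambda>j. Pj (gh j t (Suc m)) + (PP t (Suc (Suc m)) j - PP t (Suc m) j))"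
    by (rule avgv_cong) (use dom_gbS[OF _ t, of _ "Suc m"] Suc(2) in \<open>simp add: PP_def Pj_add Pj_diff\<close>)
  also have "\<dots> = avgv n (PP t (Suc (Suc m)))"
    using Suc by (simp add: avgv_add avgv_diff)
  finally show ?case .
qed

lemma TR1x: "1 \<le> t \<Longrightarrow> t \<le> T \<Longrightarrow> 1 \<le> k \<Longrightarrow> k \<le> K \<Longrightarrow>
    avgv n (\<lambda>i. Pj (gh i t k)) = avgv n (PP t k)"
  using TR1[of t "k - 1"] by simp

lemma TR2:
  assumes t: "1 \<le> t" "t \<le> T"
  shows "dG t 1 \<le> lam * (sqrt (real n) * BB)"
proof -
  have "dG t 1 = devv n (\<lambda>i. \<Sum>j<n. A t i j *\<^sub>R Pj (gb j t 1))"
    unfolding dG_def by (rule devv_cong) (rule gh_mix[OF t], use K1 in auto)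
  also have "\<dots> \<le> lam * devv n (\<lambda>j. Pj (gb j t 1))" by (rule mix_contract) (use t in simp)
  also have "devv n (\<lambda>j. Pj (gb j t 1)) = devv n (PP t 1)"
    by (rule devv_cong) (use dom_gb1 t K1 in \<open>simp add: PP_def\<close>)
  also have "devv n (PP t 1) \<le> l2v n (\<lambda>i. PP t 1 i - 0)" by (rule devv_le_center)
  also have "\<dots> \<le> sqrt (real n) * BB"
    by (rule l2v_const_bound) (use gbound xh_in t K1 in \<open>auto simp: PP_def\<close>)
  finally show ?thesis using lam0 by (simp add: mult_left_mono)
qed

end



context run
begin

lemma TR3:
  assumes t: "1 \<le> t" "t \<le> T" and k: "1 \<le> k" "Suc k \<le> K"
  shows "dG t (Suc k) \<le> lam * (dG t k + LL * (dyh t (Suc k) + dyh t k + sqrt (real n) * (\<alpha> * M)))"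
proof -
  have k': "k \<le> K" "1 \<le> Suc k" using k by auto
  have "dG t (Suc k) = devv n (\<lambda>i. \<Sum>j<n. A t i j *\<^sub>R Pj (gb j t (Suc k)))"
    unfolding dG_def by (rule devv_cong) (rule gh_mix[OF t k'(2) k(2)])
  also have "\<dots> \<le> lam * devv n (\<lambda>j. Pj (gb j t (Suc k)))" by (rule mix_contract) (use t in simp)
  also have "devv n (\<lambda>j. Pj (gb j t (Suc k))) = devv n (\<lambda>j. Pj (gh j t k) + (PP t (Suc k) j - PP t k j))"
    by (rule devv_cong) (use dom_gbS[OF _ t k] in \<open>simp add: PP_def Pj_add Pj_diff\<close>)
  also have "\<dots> \<le> dG t k + devv n (\<lambda>j. PP t (Suc k) j - PP t k j)"
    unfolding dG_def by (rule devv_add)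
  also have "devv n (\<lambda>j. PP t (Suc k) j - PP t k j) \<le> l2v n (\<lambda>j. (PP t (Suc k) j - PP t k j) - 0)"
    by (rule devv_le_center)
  also have "\<dots> \<le> l2v n (\<lambda>j. LL *\<^sub>R (xh j t (Suc k) - xh j t k))"
  proof (rule l2v_mono)
    fix j assume j: "j < n"
    have "norm (PP t (Suc k) j - PP t k j) \<le> LL * norm (xh j t (Suc k) - xh j t k)"
      unfolding PP_def by (rule glip) (use j t xh_in k k' in auto)
    then show "norm (PP t (Suc k) j - PP t k j - 0) \<le> norm (LL *\<^sub>R (xh j t (Suc k) - xh j t k))"
      using LL0 by simp
  qed
  also have "\<dots> = LL * l2v n (\<lambda>j. xh j t (Suc k) - xh j t k)" using LL0 by (simp add: l2v_scale)
  also have "l2v n (\<lambda>j. xh j t (Suc k) - xh j t k)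
      = l2v n (\<lambda>j. (xh j t (Suc k) - yb t (Suc k)) + ((yb t (Suc k) - yb t k) - (xh j t k - yb t k)))"
    by (rule l2v_cong) (simp add: algebra_simps)
  also have "\<dots> \<le> l2v n (\<lambda>j. xh j t (Suc k) - yb t (Suc k)) + (l2v n (\<lambda>j. yb t (Suc k) - yb t k) + l2v n (\<lambda>j. xh j t k - yb t k))"
    by (rule order_trans[OF l2v_triangle add_left_mono[OF l2v_diff]])
  also have "l2v n (\<lambda>j. xh j t (Suc k) - yb t (Suc k)) = dyh t (Suc k)"
    unfolding dyh_def devv_def S1(1)[OF t k'(2) k(2)] ..
  also have "l2v n (\<lambda>j. xh j t k - yb t k) = dyh t k"
    unfolding dyh_def devv_def S1(1)[OF t k(1) k'(1)] ..
  also have "l2v n (\<lambda>j. yb t (Suc k) - yb t k) \<le> sqrt (real n) * (\<alpha> * M)"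
  proof (rule l2v_const_bound)
    fix j :: nat
    have "norm (yb t (Suc k) - yb t k) = \<alpha> * norm (vb t k - yb t k)"
      using S2(1)[OF t k(1) k'(1)] al_pos by simp
    also have "\<dots> \<le> \<alpha> * M" using A2(3)[OF vb_in[OF t k(1) k'(1)] yb_in[OF t k(1)]] al_pos k' by simp
    finally show "norm (yb t (Suc k) - yb t k) \<le> \<alpha> * M" .
  qed
  finally show ?thesis using lam0 LL0
    by (smt (verit, best) mult_left_mono)
qed

end



lemma inner_avgv: "inner S (avgv n w) = (1 / real n) * (\<Sum>j<n. inner S (w j))"
  by (simp add: avgv_def inner_sum_right)

context run
begin

lemma F1:
  assumes t: "1 \<le> t" "t \<le> T" and k: "1 \<le> k" "k \<le> K"
  shows "hh t (Suc k) \<le> (1 - \<alpha>) * hh t k + \<alpha> * (M * sqrt (real n) * (dG t k + LL * dyh t k))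
           + real n * \<bar>G\<bar> * \<alpha>\<^sup>2 * M\<^sup>2 / 2"
proof -
  have tt: "t \<ge> 1" using t by simp
  define y0 where "y0 = yb t k"
  define y1 where "y1 = yb t (Suc k)"
  define xs where "xs = xstar t"
  define S where "S = (\<Sum>i<n. grad i t y0)"
  define Gb where "Gb = avgv n (\<lambda>i. Pj (gh i t k))"
  have y0X: "y0 \<in> X" unfolding y0_def using yb_in[OF t k(1)] k by simp
  have y1X: "y1 \<in> X" unfolding y1_def using yb_in[OF t] k by simp
  have xsX: "xs \<in> X" unfolding xs_def using xstar_min[OF tt] by simp
  have vbX: "vb t k \<in> X" by (rule vb_in[OF t k])
  have vX: "\<And>j. j < n \<Longrightarrow> v j t k \<in> X" using v_in[OF t k] by simp
  have y10: "y1 - y0 = \<alpha> *\<^sub>R (vb t k - y0)" unfolding y1_def y0_def using S2(1)[OF t k] by simp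
  have a: "Fsum n f t y1 - Fsum n f t y0 \<le> \<alpha> * inner S (vb t k - y0) + real n * (\<bar>G\<bar> / 2 * (\<alpha> * M)\<^sup>2)"
  proof -
    have "Fsum n f t y1 - Fsum n f t y0 = (\<Sum>i<n. f i t y1 - f i t y0)"
      by (simp add: Fsum_def sum_subtractf)
    also have "\<dots> \<le> (\<Sum>i<n. inner (grad i t y0) (y1 - y0) + \<bar>G\<bar> / 2 * (\<alpha> * M)\<^sup>2)"
    proof (rule sum_mono)
      fix i assume i: "i \<in> {..<n}"
      have "f i t y1 - f i t y0 \<le> inner (grad i t y0) (y1 - y0) + G / 2 * (norm (y1 - y0))\<^sup>2"
        using A4[of i t y1 y0] i tt y1X y0X by simp
      also have "G / 2 * (norm (y1 - y0))\<^sup>2 \<le> \<bar>G\<bar> / 2 * (\<alpha> * M)\<^sup>2"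
      proof -
        have "norm (y1 - y0) = \<alpha> * norm (vb t k - y0)" using y10 al_pos by simp
        also have "\<dots> \<le> \<alpha> * M" using A2(3)[OF vbX y0X] al_pos by simp
        finally have "norm (y1 - y0) \<le> \<alpha> * M" .
        then have "(norm (y1 - y0))\<^sup>2 \<le> (\<alpha> * M)\<^sup>2" by (intro power_mono) auto
        then show ?thesis by (smt (verit) abs_ge_zero abs_ge_self mult_right_mono mult_left_mono
              divide_nonneg_nonneg zero_le_numeral zero_le_power2 divide_right_mono)
      qed
      finally show "f i t y1 - f i t y0 \<le> inner (grad i t y0) (y1 - y0) + \<bar>G\<bar> / 2 * (\<alpha> * M)\<^sup>2" by simp
    qed
    also have "\<dots> = inner S (y1 - y0) + real n * (\<bar>G\<bar> / 2 * (\<alpha> * M)\<^sup>2)"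
      by (simp add: S_def sum.distrib inner_sum_left)
    also have "inner S (y1 - y0) = \<alpha> * inner S (vb t k - y0)" by (simp add: y10)
    finally show ?thesis .
  qed
  have d: "inner S (xs - y0) \<le> - hh t k"
  proof -
    have "inner S (xs - y0) = (\<Sum>i<n. inner (grad i t y0) (xs - y0))" by (simp add: S_def inner_sum_left)
    also have "\<dots> \<le> (\<Sum>i<n. f i t xs - f i t y0)"
      by (rule sum_mono) (use tang[OF _ tt y0X xsX] in force)
    also have "\<dots> = - hh t k" by (simp add: hh_def Fsum_def sum_subtractf y0_def xs_def)
    finally show ?thesis .
  qed
  have sumPP: "norm ((\<Sum>i<n. PP t k i) - Pj S) \<le> LL * (sqrt (real n) * dyh t k)"
  proof -
    have "(\<Sum>i<n. PP t k i) - Pj S = (\<Sum>i<n. PP t k i - Pj (grad i t y0))"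
      by (simp add: S_def Pj_sum sum_subtractf)
    then have "norm ((\<Sum>i<n. PP t k i) - Pj S) \<le> (\<Sum>i<n. norm (PP t k i - Pj (grad i t y0)))"
      by (simp add: norm_sum)
    also have "\<dots> \<le> (\<Sum>i<n. LL * norm (xh i t k - y0))"
      by (rule sum_mono) (use glip tt xh_in[OF t k] y0X in \<open>auto simp: PP_def\<close>)
    also have "\<dots> = LL * (\<Sum>i<n. norm (xh i t k - y0))" by (simp add: sum_distrib_left)
    also have "(\<Sum>i<n. norm (xh i t k - y0)) \<le> sqrt (real n) * l2v n (\<lambda>i. xh i t k - y0)"
      by (rule sum_norm_le_l2v)
    also have "l2v n (\<lambda>i. xh i t k - y0) = dyh t k"
      unfolding dyh_def devv_def S1(1)[OF t k] y0_def ..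
    finally show ?thesis using LL0 by (simp add: mult_left_mono)
  qed
  have nGb: "real n *\<^sub>R Gb = (\<Sum>i<n. PP t k i)"
  proof -
    have "Gb = avgv n (PP t k)" using TR1x[OF t k] unfolding Gb_def by simp
    then show ?thesis unfolding avgv_def using n_pos by simp
  qed
  have c: "inner S (v j t k - y0) \<le> inner S (xs - y0) + M * (real n * norm (Pj (gh j t k) - Gb) + LL * (sqrt (real n) * dyh t k))"
    if j: "j < n" for j
  proof -
    have lmo: "inner (gh j t k) (v j t k - xs) \<le> 0"
      using dom_lmo[OF j t k xsX] by (simp add: inner_diff_right inner_commute)
    have e1: "inner S (v j t k - y0) = inner S (xs - y0) + inner (S - real n *\<^sub>R gh j t k) (v j t k - xs)
              + real n * inner (gh j t k) (v j t k - xs)"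
      by (simp add: inner_diff_left inner_diff_right algebra_simps)
    have e2: "inner (S - real n *\<^sub>R gh j t k) (v j t k - xs) = inner (Pj S - real n *\<^sub>R Pj (gh j t k)) (v j t k - xs)"
      using inner_Pj[OF diff_span[OF vX[OF j] xsX], of "S - real n *\<^sub>R gh j t k"]
      by (simp add: Pj_diff Pj_scale)
    have "inner (Pj S - real n *\<^sub>R Pj (gh j t k)) (v j t k - xs) \<le> norm (Pj S - real n *\<^sub>R Pj (gh j t k)) * norm (v j t k - xs)"
      by (rule Cauchy_Schwarz_ineq2[THEN abs_le_D1])
    also have "\<dots> \<le> norm (Pj S - real n *\<^sub>R Pj (gh j t k)) * M"
      using A2(3)[OF vX[OF j] xsX] by (simp add: mult_left_mono)
    also have "norm (Pj S - real n *\<^sub>R Pj (gh j t k)) \<le> real n * norm (Pj (gh j t k) - Gb) + LL * (sqrt (real n) * dyh t k)"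
    proof -
      have "Pj S - real n *\<^sub>R Pj (gh j t k) = - (real n *\<^sub>R (Pj (gh j t k) - Gb)) - ((\<Sum>i<n. PP t k i) - Pj S)"
        using nGb by (simp add: algebra_simps)
      then have "norm (Pj S - real n *\<^sub>R Pj (gh j t k)) \<le> norm (real n *\<^sub>R (Pj (gh j t k) - Gb)) + norm ((\<Sum>i<n. PP t k i) - Pj S)"
        by (metis norm_diff_ineq norm_minus_cancel norm_triangle_ineq4)
      then show ?thesis using sumPP by simp
    qed
    then have "norm (Pj S - real n *\<^sub>R Pj (gh j t k)) * M \<le> (real n * norm (Pj (gh j t k) - Gb) + LL * (sqrt (real n) * dyh t k)) * M"
      using M0 by (rule mult_right_mono)
    finally have "inner (S - real n *\<^sub>R gh j t k) (v j t k - xs) \<le> M * (real n * norm (Pj (gh j t k) - Gb) + LL * (sqrt (real n) * dyh t k))"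
      using e2 by (simp add: mult.commute)
    moreover have "real n * inner (gh j t k) (v j t k - xs) \<le> 0" using lmo by (simp add: mult_nonneg_nonpos)
    ultimately show ?thesis using e1 by linarith
  qed
  have b: "inner S (vb t k - y0) \<le> - hh t k + M * sqrt (real n) * (dG t k + LL * dyh t k)"
  proof -
    have "vb t k - y0 = avgv n (\<lambda>j. v j t k - y0)"
      unfolding vb_def avgv_diff avgv_const[OF n_pos] ..
    then have "inner S (vb t k - y0) = (1 / real n) * (\<Sum>j<n. inner S (v j t k - y0))"
      by (simp add: inner_avgv)
    also have "\<dots> \<le> (1 / real n) * (\<Sum>j<n. inner S (xs - y0) + M * (real n * norm (Pj (gh j t k) - Gb) + LL * (sqrt (real n) * dyh t k)))"
      by (intro mult_left_mono sum_mono c) auto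
    also have "\<dots> = inner S (xs - y0) + M * (\<Sum>j<n. norm (Pj (gh j t k) - Gb)) + M * LL * sqrt (real n) * dyh t k"
      using n_pos by (simp add: sum.distrib sum_distrib_left[symmetric] field_simps)
    also have "(\<Sum>j<n. norm (Pj (gh j t k) - Gb)) \<le> sqrt (real n) * dG t k"
      unfolding dG_def devv_def Gb_def by (rule sum_norm_le_l2v)
    finally have "inner S (vb t k - y0) \<le> inner S (xs - y0) + M * (sqrt (real n) * dG t k) + M * LL * sqrt (real n) * dyh t k"
      using M0 by (smt (verit) mult_left_mono)
    then show ?thesis using d by (simp add: algebra_simps)
  qed
  have "hh t (Suc k) = hh t k + (Fsum n f t y1 - Fsum n f t y0)"
    by (simp add: hh_def y1_def y0_def)
  also have "\<dots> \<le> hh t k + \<alpha> * (- hh t k + M * sqrt (real n) * (dG t k + LL * dyh t k)) + real n * (\<bar>G\<bar> / 2 * (\<alpha> * M)\<^sup>2)"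
    using a b al_pos by (smt (verit) mult_left_mono)
  finally show ?thesis by (simp add: algebra_simps power_mult_distrib)
qed

end



context setting
begin
definition "cc = exp (- 1 / \<rho>)"
lemma cc0: "0 \<le> cc" unfolding cc_def by simp
lemma cc1: "cc < 1" unfolding cc_def using rho by simp
end

context run
begin

definition "ee t k = \<alpha> * (M * sqrt (real n) * (dG t k + LL * dyh t k)) + real n * \<bar>G\<bar> * \<alpha>\<^sup>2 * M\<^sup>2 / 2"

lemma ee0: "0 \<le> ee t k"
  unfolding ee_def using al_pos M0 LL0 by (simp add: dG_def dyh_def)

lemma dy0: "0 \<le> dy t k" by (simp add: dy_def)
lemma dyh0: "0 \<le> dyh t k" by (simp add: dyh_def)
lemma dG0: "0 \<le> dG t k" by (simp add: dG_def)

lemma hh0: "1 \<le> t \<Longrightarrow> t \<le> T \<Longrightarrow> 1 \<le> k \<Longrightarrow> k \<le> K + 1 \<Longrightarrow> 0 \<le> hh t k"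
  unfolding hh_def using xstar_min[of t] yb_in[of t k] by auto

lemma R1aux:
  assumes t: "1 \<le> t" "t \<le> T"
  shows "m \<le> K \<Longrightarrow> hh t (Suc m) \<le> (1 - \<alpha>) ^ m * hh t 1 + (\<Sum>k<m. ee t (Suc k))"
proof (induction m)
  case 0 then show ?case by simp
next
  case (Suc m)
  have "hh t (Suc (Suc m)) \<le> (1 - \<alpha>) * hh t (Suc m) + ee t (Suc m)"
    using F1[OF t, of "Suc m"] Suc(2) unfolding ee_def by simp
  also have "\<dots> \<le> (1 - \<alpha>) * ((1 - \<alpha>) ^ m * hh t 1 + (\<Sum>k<m. ee t (Suc k))) + ee t (Suc m)"
    using Suc al_le1 by (intro add_right_mono mult_left_mono) auto
  also have "\<dots> \<le> (1 - \<alpha>) ^ Suc m * hh t 1 + (\<Sum>k<m. ee t (Suc k)) + ee t (Suc m)"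
  proof -
    have "(1 - \<alpha>) * (\<Sum>k<m. ee t (Suc k)) \<le> 1 * (\<Sum>k<m. ee t (Suc k))"
      using al_pos by (intro mult_right_mono sum_nonneg ee0) auto
    then show ?thesis by (simp add: algebra_simps)
  qed
  finally show ?case by simp
qed

lemma pow_cc: "(1 - \<alpha>) ^ K \<le> cc"
proof -
  have "1 - \<alpha> \<le> exp (- \<alpha>)" using exp_ge_add_one_self[of "- \<alpha>"] by simp
  then have "(1 - \<alpha>) ^ K \<le> exp (- \<alpha>) ^ K" using al_le1 by (intro power_mono) auto
  also have "\<dots> = exp (real K * (- \<alpha>))" by (rule exp_of_nat_mult[symmetric])
  also have "real K * (- \<alpha>) = - 1 / \<rho>" using Kal by simp
  finally show ?thesis unfolding cc_def .
qed

lemma R1: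
  assumes t: "1 \<le> t" "t \<le> T"
  shows "hh t (Suc K) \<le> cc * hh t 1 + (\<Sum>k<K. ee t (Suc k))"
proof -
  have "hh t (Suc K) \<le> (1 - \<alpha>) ^ K * hh t 1 + (\<Sum>k<K. ee t (Suc k))" by (rule R1aux[OF t]) simp
  also have "(1 - \<alpha>) ^ K * hh t 1 \<le> cc * hh t 1"
    using pow_cc hh0[OF t, of 1] by (intro mult_right_mono) auto
  finally show ?thesis by simp
qed

lemma yb_next: "1 \<le> t \<Longrightarrow> Suc t \<le> T \<Longrightarrow> yb (Suc t) 1 = yb t (Suc K)"
  unfolding yb_def by (rule avgv_cong) (use dom_t in auto)

lemma dy_next: "1 \<le> t \<Longrightarrow> Suc t \<le> T \<Longrightarrow> dy (Suc t) 1 = dy t (Suc K)"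
  unfolding dy_def by (rule devv_cong) (use dom_t in auto)

lemma R2:
  assumes t: "1 \<le> t" "Suc t \<le> T"
  shows "hh (Suc t) 1 \<le> hh t (Suc K) + 2 * real n * var t"
proof -
  have tt: "t \<ge> 1" "Suc t \<ge> 1" using t by auto
  define y where "y = yb t (Suc K)"
  have yX: "y \<in> X" unfolding y_def using yb_in[of t "Suc K"] t by simp
  have s1: "xstar (Suc t) \<in> X" using xstar_min[OF tt(2)] by simp
  have fy: "Fsum n f (Suc t) y - Fsum n f t y \<le> real n * var t"
  proof -
    have "Fsum n f (Suc t) y - Fsum n f t y = (\<Sum>i<n. f i (Suc t) y - f i t y)"
      by (simp add: Fsum_def sum_subtractf)
    also have "\<dots> \<le> (\<Sum>i<n. var t)" by (rule sum_mono) (use var_bound[OF _ tt(1) yX] in force)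
    finally show ?thesis by simp
  qed
  have fs: "Fsum n f t (xstar (Suc t)) - Fsum n f (Suc t) (xstar (Suc t)) \<le> real n * var t"
  proof -
    have "Fsum n f t (xstar (Suc t)) - Fsum n f (Suc t) (xstar (Suc t)) = (\<Sum>i<n. f i t (xstar (Suc t)) - f i (Suc t) (xstar (Suc t)))"
      by (simp add: Fsum_def sum_subtractf)
    also have "\<dots> \<le> (\<Sum>i<n. var t)" by (rule sum_mono) (use var_bound[OF _ tt(1) s1] in force)
    finally show ?thesis by simp
  qed
  have mn: "Fsum n f t (xstar t) \<le> Fsum n f t (xstar (Suc t))" using xstar_min[OF tt(1)] s1 by blast
  show ?thesis unfolding hh_def yb_next[OF t] y_def[symmetric] using fy fs mn by linarith
qed

end



lemma sum_shift_le:
  fixes g :: "nat \<Rightarrow> real"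
  assumes "\<And>k. 0 \<le> g k"
  shows "(\<Sum>k<N - 1. g (Suc k)) \<le> (\<Sum>k<N. g k)"
proof (cases N)
  case 0 then show ?thesis by simp
next
  case (Suc m)
  have "(\<Sum>k<N. g k) = g 0 + (\<Sum>k<m. g (Suc k))" unfolding Suc by (rule sum.lessThan_Suc_shift)
  then show ?thesis using Suc assms[of 0] by simp
qed

lemma sum_pred_le:
  fixes g :: "nat \<Rightarrow> real"
  assumes "\<And>k. 0 \<le> g k"
  shows "(\<Sum>k<N - 1. g k) \<le> (\<Sum>k<N. g k)"
  by (rule sum_mono2) (use assms in auto)

lemma rec_sum2:
  fixes a u :: "nat \<Rightarrow> real"
  assumes rec: "\<And>k. Suc k < N \<Longrightarrow> a (Suc k) \<le> lam * a k + u k"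
    and a0: "\<And>k. k < N \<Longrightarrow> 0 \<le> a k" and l0: "0 \<le> lam" and N1: "N \<ge> 1"
  shows "(1 - lam) * (\<Sum>k<N. a k) \<le> a 0 + (\<Sum>k<N - 1. u k)"
proof (cases N)
  case 0 then show ?thesis using N1 by simp
next
  case (Suc m)
  have "(\<Sum>k<N. a k) = a 0 + (\<Sum>k<m. a (Suc k))"
    unfolding Suc by (rule sum.lessThan_Suc_shift)
  also have "(\<Sum>k<m. a (Suc k)) \<le> (\<Sum>k<m. lam * a k + u k)"
    by (rule sum_mono) (use rec Suc in auto)
  also have "\<dots> = lam * (\<Sum>k<m. a k) + (\<Sum>k<m. u k)"
    by (simp add: sum.distrib sum_distrib_left)
  also have "lam * (\<Sum>k<m. a k) \<le> lam * (\<Sum>k<N. a k)"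
    unfolding Suc using a0 l0 Suc by (intro mult_left_mono) (simp_all add: a0)
  finally show ?thesis using Suc by (simp add: algebra_simps)
qed

lemma sum_from1: "(\<Sum>t\<in>{1..<T}. g t) = (\<Sum>t<T - 1. g (Suc t))"
proof (cases T)
  case 0 then show ?thesis by simp
next
  case (Suc m)
  have "(\<Sum>t\<in>{Suc 0..<Suc m}. g t) = (\<Sum>t\<in>{0..<m}. g (Suc t))" by (rule sum.shift_bounds_Suc_ivl)
  then show ?thesis using Suc by (simp add: atLeast0LessThan)
qed

context run
begin

lemma dy_le: "1 \<le> t \<Longrightarrow> t \<le> T \<Longrightarrow> 1 \<le> k \<Longrightarrow> k \<le> K + 1 \<Longrightarrow> dy t k \<le> sqrt (real n) * M"
  unfolding dy_def by (rule dev_le_M) (rule xk_in)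

lemma Q1:
  "(1 - lam) * (\<Sum>t<T. dy (Suc t) 1) \<le> sqrt (real n) * M + real T * Dc"
proof -
  have "(1 - lam) * (\<Sum>t<T. dy (Suc t) 1) \<le> dy (Suc 0) 1 + (\<Sum>t<T - 1. Dc)"
  proof (rule rec_sum)
    fix t assume st: "Suc t < T"
    have "dy (Suc (Suc t)) 1 = dy (Suc t) (Suc K)" by (rule dy_next) (use st in auto)
    also have "\<dots> \<le> lam * dy (Suc t) 1 + Dc" by (rule C2K) (use st in auto)
    finally show "dy (Suc (Suc t)) 1 \<le> lam * dy (Suc t) 1 + Dc" .
  qed (use dy0 lam0 in auto)
  also have "dy (Suc 0) 1 \<le> sqrt (real n) * M" by (rule dy_le) (use T1 in auto)
  also have "(\<Sum>t<T - 1. Dc) \<le> real T * Dc" using Dc0 by (simp add: mult_right_mono)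
  finally show ?thesis by simp
qed

lemma Q2:
  assumes t: "1 \<le> t" "t \<le> T"
  shows "(1 - lam) * (\<Sum>k<K. dy t (Suc k)) \<le> dy t 1 + real K * (\<alpha> * sqrt (real n) * M)"
proof -
  have "(1 - lam) * (\<Sum>k<K. dy t (Suc k)) \<le> dy t (Suc 0) + (\<Sum>k<K - 1. \<alpha> * sqrt (real n) * M)"
  proof (rule rec_sum)
    fix k assume "Suc k < K"
    then show "dy t (Suc (Suc k)) \<le> lam * dy t (Suc k) + \<alpha> * sqrt (real n) * M"
      using S2(2)[OF t, of "Suc k"] by simp
  qed (use dy0 lam0 in auto)
  also have "(\<Sum>k<K - 1. \<alpha> * sqrt (real n) * M) \<le> real K * (\<alpha> * sqrt (real n) * M)"
    using al_pos M0 by (simp add: mult_right_mono)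
  finally show ?thesis by simp
qed

lemma Q3:
  assumes t: "1 \<le> t" "t \<le> T"
  shows "(1 - lam) * (\<Sum>k<K. dG t (Suc k))
     \<le> sqrt (real n) * BB + LL * (2 * (\<Sum>k<K. dyh t (Suc k)) + real K * (sqrt (real n) * (\<alpha> * M)))"
proof -
  define u where "u k = lam * (LL * (dyh t (Suc (Suc k)) + dyh t (Suc k) + sqrt (real n) * (\<alpha> * M)))" for k
  have "(1 - lam) * (\<Sum>k<K. dG t (Suc k)) \<le> dG t (Suc 0) + (\<Sum>k<K - 1. u k)"
  proof (rule rec_sum)
    fix k assume "Suc k < K"
    then show "dG t (Suc (Suc k)) \<le> lam * dG t (Suc k) + u k"
      using TR3[OF t, of "Suc k"] unfolding u_def by (simp add: algebra_simps)
  qed (use dG0 lam0 in auto)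
  also have "dG t (Suc 0) \<le> sqrt (real n) * BB"
  proof -
    have "dG t 1 \<le> lam * (sqrt (real n) * BB)" by (rule TR2[OF t])
    also have "\<dots> \<le> 1 * (sqrt (real n) * BB)" using lam1 BB0 by (intro mult_right_mono) auto
    finally show ?thesis by simp
  qed
  also have "(\<Sum>k<K - 1. u k) \<le> (\<Sum>k<K - 1. LL * (dyh t (Suc (Suc k)) + dyh t (Suc k) + sqrt (real n) * (\<alpha> * M)))"
  proof (rule sum_mono)
    fix k
    have "0 \<le> LL * (dyh t (Suc (Suc k)) + dyh t (Suc k) + sqrt (real n) * (\<alpha> * M))"
      using LL0 dyh0 al_pos M0 by simp
    then show "u k \<le> LL * (dyh t (Suc (Suc k)) + dyh t (Suc k) + sqrt (real n) * (\<alpha> * M))"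
      unfolding u_def using lam1 lam0 by (simp add: mult_left_le_one_le)
  qed
  also have "\<dots> = LL * ((\<Sum>k<K - 1. dyh t (Suc (Suc k))) + (\<Sum>k<K - 1. dyh t (Suc k)) + (\<Sum>k<K - 1. sqrt (real n) * (\<alpha> * M)))"
  proof -
    have sd: "(\<Sum>k<K - 1. dyh t (Suc (Suc k)) + dyh t (Suc k) + sqrt (real n) * (\<alpha> * M))
      = (\<Sum>k<K - 1. dyh t (Suc (Suc k))) + (\<Sum>k<K - 1. dyh t (Suc k)) + (\<Sum>k<K - 1. sqrt (real n) * (\<alpha> * M))"
      by (simp only: sum.distrib)
    show ?thesis by (simp only: sum_distrib_left[symmetric] sd)
  qed
  also have "\<dots> \<le> LL * (2 * (\<Sum>k<K. dyh t (Suc k)) + real K * (sqrt (real n) * (\<alpha> * M)))"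
  proof (rule mult_left_mono)
    have "(\<Sum>k<K - 1. dyh t (Suc (Suc k))) \<le> (\<Sum>k<K. dyh t (Suc k))"
      by (rule sum_shift_le[of "\<lambda>k. dyh t (Suc k)"]) (rule dyh0)
    moreover have "(\<Sum>k<K - 1. dyh t (Suc k)) \<le> (\<Sum>k<K. dyh t (Suc k))"
      by (rule sum_pred_le) (rule dyh0)
    moreover have "(\<Sum>k<K - 1. sqrt (real n) * (\<alpha> * M)) \<le> real K * (sqrt (real n) * (\<alpha> * M))"
      using al_pos M0 by (simp add: mult_right_mono)
    ultimately show "(\<Sum>k<K - 1. dyh t (Suc (Suc k))) + (\<Sum>k<K - 1. dyh t (Suc k)) + (\<Sum>k<K - 1. sqrt (real n) * (\<alpha> * M))
        \<le> 2 * (\<Sum>k<K. dyh t (Suc k)) + real K * (sqrt (real n) * (\<alpha> * M))" by linarith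
  qed (rule LL0)
  finally show ?thesis by simp
qed

lemma dyh_le_dy: "1 \<le> t \<Longrightarrow> t \<le> T \<Longrightarrow> 1 \<le> k \<Longrightarrow> k \<le> K \<Longrightarrow> dyh t k \<le> dy t k"
proof -
  assume a: "1 \<le> t" "t \<le> T" "1 \<le> k" "k \<le> K"
  have "dyh t k \<le> lam * dy t k" by (rule S1(2)[OF a])
  also have "\<dots> \<le> 1 * dy t k" using lam1 dy0 by (intro mult_right_mono) auto
  finally show ?thesis by simp
qed

lemma hh11: "hh 1 1 \<le> real n * \<bar>L\<bar> * M"
proof -
  have y: "yb 1 1 \<in> X" using yb_in[of 1 1] T1 K1 by simp
  have xs: "xstar 1 \<in> X" using xstar_min[of 1] by simp
  have "hh 1 1 = (\<Sum>i<n. f i 1 (yb 1 1) - f i 1 (xstar 1))" by (simp add: hh_def Fsum_def sum_subtractf)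
  also have "\<dots> \<le> (\<Sum>i<n. \<bar>L\<bar> * M)"
  proof (rule sum_mono)
    fix i assume i: "i \<in> {..<n}"
    have "f i 1 (yb 1 1) - f i 1 (xstar 1) \<le> L * norm (yb 1 1 - xstar 1)" using A3[of i 1 "yb 1 1" "xstar 1"] i y xs by simp
    also have "\<dots> \<le> \<bar>L\<bar> * M" using A2(3)[OF y xs]
      by (meson abs_ge_self abs_ge_zero mult_mono norm_ge_zero order_trans)
    finally show "f i 1 (yb 1 1) - f i 1 (xstar 1) \<le> \<bar>L\<bar> * M" .
  qed
  finally show ?thesis by simp
qed

lemma Q9:
  "(1 - cc) * (\<Sum>t<T. hh (Suc t) 1)
     \<le> real n * \<bar>L\<bar> * M + (\<Sum>t<T. \<Sum>k<K. ee (Suc t) (Suc k)) + 2 * real n * H_var n X f T"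
proof -
  define u where "u t = (\<Sum>k<K. ee (Suc t) (Suc k)) + 2 * real n * var (Suc t)" for t
  have "(1 - cc) * (\<Sum>t<T. hh (Suc t) 1) \<le> hh (Suc 0) 1 + (\<Sum>t<T - 1. u t)"
  proof (rule rec_sum2)
    fix t assume st: "Suc t < T"
    have "hh (Suc (Suc t)) 1 \<le> hh (Suc t) (Suc K) + 2 * real n * var (Suc t)" by (rule R2) (use st in auto)
    also have "hh (Suc t) (Suc K) \<le> cc * hh (Suc t) 1 + (\<Sum>k<K. ee (Suc t) (Suc k))" by (rule R1) (use st in auto)
    finally show "hh (Suc (Suc t)) 1 \<le> cc * hh (Suc t) 1 + u t" unfolding u_def by simp
  next
    fix t assume "t < T" then show "0 \<le> hh (Suc t) 1" by (intro hh0) (use K1 in auto)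
  qed (use cc0 T1 in auto)
  also have "(\<Sum>t<T - 1. u t) = (\<Sum>t<T - 1. \<Sum>k<K. ee (Suc t) (Suc k)) + 2 * real n * (\<Sum>t<T - 1. var (Suc t))"
    by (simp add: u_def sum.distrib sum_distrib_left)
  also have "(\<Sum>t<T - 1. \<Sum>k<K. ee (Suc t) (Suc k)) \<le> (\<Sum>t<T. \<Sum>k<K. ee (Suc t) (Suc k))"
    by (rule sum_pred_le) (intro sum_nonneg ee0)
  also have "(\<Sum>t<T - 1. var (Suc t)) = H_var n X f T" unfolding H_var_eq sum_from1 ..
  finally show ?thesis using hh11 by simp
qed

lemma Q10:
  assumes j: "j < n"
  shows "regret_d n f x xstar j T \<le> (\<Sum>t<T. hh (Suc t) 1) + real n * \<bar>L\<bar> * (\<Sum>t<T. dy (Suc t) 1)"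
proof -
  have "regret_d n f x xstar j T = (\<Sum>t<T. Fsum n f (Suc t) (x j (Suc t)) - Fsum n f (Suc t) (xstar (Suc t)))"
    unfolding regret_d_def by (simp add: sum.atLeast1_atMost_eq sum_subtractf)
  also have "\<dots> \<le> (\<Sum>t<T. hh (Suc t) 1 + real n * \<bar>L\<bar> * dy (Suc t) 1)"
  proof (rule sum_mono)
    fix t assume "t \<in> {..<T}"
    then have s: "1 \<le> Suc t" "Suc t \<le> T" by auto
    define s' where "s' = Suc t"
    have xj: "x j s' = xk j s' 1" using dom_t[OF j] s unfolding s'_def by simp
    have xX: "x j s' \<in> X" using xk_in[OF s, of 1 j] K1 j xj unfolding s'_def by simp
    have yX: "yb s' 1 \<in> X" using yb_in[OF s, of 1] unfolding s'_def by simp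
    have "Fsum n f s' (x j s') - Fsum n f s' (yb s' 1) = (\<Sum>i<n. f i s' (x j s') - f i s' (yb s' 1))"
      by (simp add: Fsum_def sum_subtractf)
    also have "\<dots> \<le> (\<Sum>i<n. \<bar>L\<bar> * dy s' 1)"
    proof (rule sum_mono)
      fix i assume i: "i \<in> {..<n}"
      have "f i s' (x j s') - f i s' (yb s' 1) \<le> L * norm (x j s' - yb s' 1)"
        using A3[of i s' "x j s'" "yb s' 1"] i xX yX s unfolding s'_def by simp
      also have "\<dots> \<le> \<bar>L\<bar> * norm (x j s' - yb s' 1)" by (simp add: mult_right_mono)
      also have "norm (x j s' - yb s' 1) \<le> dy s' 1"
        unfolding xj yb_def dy_def by (rule devv_member[OF j])
      then have "\<bar>L\<bar> * norm (x j s' - yb s' 1) \<le> \<bar>L\<bar> * dy s' 1" by (simp add: mult_left_mono)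
      finally show "f i s' (x j s') - f i s' (yb s' 1) \<le> \<bar>L\<bar> * dy s' 1" .
    qed
    finally have "Fsum n f s' (x j s') - Fsum n f s' (yb s' 1) \<le> real n * \<bar>L\<bar> * dy s' 1" by simp
    then show "Fsum n f (Suc t) (x j (Suc t)) - Fsum n f (Suc t) (xstar (Suc t)) \<le> hh (Suc t) 1 + real n * \<bar>L\<bar> * dy (Suc t) 1"
      unfolding hh_def s'_def by simp
  qed
  also have "\<dots> = (\<Sum>t<T. hh (Suc t) 1) + real n * \<bar>L\<bar> * (\<Sum>t<T. dy (Suc t) 1)"
    by (simp add: sum.distrib sum_distrib_left)
  finally show ?thesis .
qed

end



lemma div_from_mult: "(0::real) < om \<Longrightarrow> om * X \<le> Y \<Longrightarrow> X \<le> Y / om"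
  by (simp add: pos_le_divide_eq mult.commute)

context setting
begin
definition "om = 1 - lam"
definition "oc = 1 - cc"
definition "sn = sqrt (real n)"
definition "a1 = sn * M / om"
definition "a2 = sn * M / om\<^sup>2"
definition "b1 = a1 / om"
definition "b2 = (a2 + sn * M) / om"
definition "g1 = 2 * LL * b1 / om"
definition "g2 = (sn * BB + 2 * LL * b2 + LL * sn * M) / om"
definition "e1 = M * sn * (g1 + LL * b1)"
definition "e2 = M * sn * (g2 + LL * b2) + real n * \<bar>G\<bar> * M\<^sup>2 / 2"
definition "CR0 = (real n * \<bar>L\<bar> * M + e1) / oc + real n * \<bar>L\<bar> * a1"
definition "CR1 = e2 / oc + real n * \<bar>L\<bar> * a2"
definition "CR2 = 2 * real n / oc"

lemma om0: "0 < om" unfolding om_def using lam1 by simp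
lemma oc0: "0 < oc" unfolding oc_def using cc1 by simp
lemma sn0: "0 \<le> sn" unfolding sn_def by simp
lemma consts_nonneg: "0 \<le> a1" "0 \<le> a2" "0 \<le> b1" "0 \<le> b2" "0 \<le> g1" "0 \<le> g2" "0 \<le> e1" "0 \<le> e2"
  "0 \<le> CR0" "0 \<le> CR1" "0 \<le> CR2"
proof -
  note p = om0 oc0 sn0 M0 LL0 BB0
  show a1: "0 \<le> a1" unfolding a1_def using p by simp
  show a2: "0 \<le> a2" unfolding a2_def using p by simp
  show b1: "0 \<le> b1" unfolding b1_def using p a1 by simp
  show b2: "0 \<le> b2" unfolding b2_def using p a2 by simp
  show g1: "0 \<le> g1" unfolding g1_def using p b1 by simp
  show g2: "0 \<le> g2" unfolding g2_def using p b2 by simp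
  show e1: "0 \<le> e1" unfolding e1_def using p g1 b1 by simp
  show e2: "0 \<le> e2" unfolding e2_def using p g2 b2 by simp
  show "0 \<le> CR0" unfolding CR0_def using p e1 a1 by simp
  show "0 \<le> CR1" unfolding CR1_def using p e2 a2 by simp
  show "0 \<le> CR2" unfolding CR2_def using p by simp
qed
end

context run
begin

definition "tau = real T * \<alpha>"
lemma tau0: "0 \<le> tau" unfolding tau_def using al_pos by simp

lemma L1: "(\<Sum>t<T. dy (Suc t) 1) \<le> a1 + a2 * tau"
proof -
  have "om * (\<Sum>t<T. dy (Suc t) 1) \<le> sn * M + real T * Dc" using Q1 unfolding om_def sn_def by simp
  then have "(\<Sum>t<T. dy (Suc t) 1) \<le> (sn * M + real T * Dc) / om" by (rule div_from_mult[OF om0])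
  also have "\<dots> = a1 + a2 * tau"
    unfolding a1_def a2_def tau_def Dc_def sn_def om_def[symmetric] using om0
    by (simp add: field_simps power2_eq_square)
  finally show ?thesis .
qed

lemma L2: "\<alpha> * (\<Sum>t<T. \<Sum>k<K. dy (Suc t) (Suc k)) \<le> b1 + b2 * tau"
proof -
  have "om * (\<Sum>t<T. \<Sum>k<K. dy (Suc t) (Suc k)) = (\<Sum>t<T. om * (\<Sum>k<K. dy (Suc t) (Suc k)))"
    by (simp add: sum_distrib_left)
  also have "\<dots> \<le> (\<Sum>t<T. dy (Suc t) 1 + real K * (\<alpha> * sn * M))"
    by (rule sum_mono) (use Q2 in \<open>auto simp: om_def sn_def\<close>)
  also have "\<dots> = (\<Sum>t<T. dy (Suc t) 1) + real T * (real K * (\<alpha> * sn * M))" by (simp add: sum.distrib)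
  finally have A: "om * (\<Sum>t<T. \<Sum>k<K. dy (Suc t) (Suc k)) \<le> (\<Sum>t<T. dy (Suc t) 1) + real T * (real K * (\<alpha> * sn * M))" .
  have B: "\<alpha> * (\<Sum>t<T. dy (Suc t) 1) \<le> (\<Sum>t<T. dy (Suc t) 1)"
    using al_le1 by (intro mult_left_le_one_le sum_nonneg) (auto intro: dy0 al_pos[THEN less_imp_le])
  have C: "\<alpha> * (real T * (real K * (\<alpha> * sn * M))) \<le> tau * (sn * M)"
  proof -
    have "\<alpha> * (real T * (real K * (\<alpha> * sn * M))) = tau * (real K * \<alpha>) * (sn * M)" by (simp add: tau_def algebra_simps)
    also have "\<dots> \<le> tau * 1 * (sn * M)" using Kal_le1 tau0 sn0 M0 by (intro mult_right_mono mult_left_mono) auto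
    finally show ?thesis by simp
  qed
  have "om * (\<alpha> * (\<Sum>t<T. \<Sum>k<K. dy (Suc t) (Suc k))) = \<alpha> * (om * (\<Sum>t<T. \<Sum>k<K. dy (Suc t) (Suc k)))" by simp
  also have "\<dots> \<le> \<alpha> * ((\<Sum>t<T. dy (Suc t) 1) + real T * (real K * (\<alpha> * sn * M)))"
    using A al_pos by (intro mult_left_mono) auto
  also have "\<dots> \<le> (\<Sum>t<T. dy (Suc t) 1) + tau * (sn * M)" using B C by (simp add: distrib_left)
  also have "\<dots> \<le> a1 + a2 * tau + tau * (sn * M)" using L1 by simp
  finally have "\<alpha> * (\<Sum>t<T. \<Sum>k<K. dy (Suc t) (Suc k)) \<le> (a1 + a2 * tau + tau * (sn * M)) / om"
    by (rule div_from_mult[OF om0])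
  also have "\<dots> = b1 + b2 * tau" unfolding b1_def b2_def using om0 by (simp add: field_simps)
  finally show ?thesis .
qed

lemma SH_le: "(\<Sum>t<T. \<Sum>k<K. dyh (Suc t) (Suc k)) \<le> (\<Sum>t<T. \<Sum>k<K. dy (Suc t) (Suc k))"
  by (intro sum_mono dyh_le_dy) auto

lemma L2h: "\<alpha> * (\<Sum>t<T. \<Sum>k<K. dyh (Suc t) (Suc k)) \<le> b1 + b2 * tau"
  using L2 SH_le al_pos by (smt (verit) mult_left_mono)

lemma L3: "\<alpha> * (\<Sum>t<T. \<Sum>k<K. dG (Suc t) (Suc k)) \<le> g1 + g2 * tau"
proof -
  define SH where "SH = (\<Sum>t<T. \<Sum>k<K. dyh (Suc t) (Suc k))"
  have "om * (\<Sum>t<T. \<Sum>k<K. dG (Suc t) (Suc k)) = (\<Sum>t<T. om * (\<Sum>k<K. dG (Suc t) (Suc k)))"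
    by (simp add: sum_distrib_left)
  also have "\<dots> \<le> (\<Sum>t<T. sn * BB + LL * (2 * (\<Sum>k<K. dyh (Suc t) (Suc k)) + real K * (sn * (\<alpha> * M))))"
    by (rule sum_mono) (use Q3 in \<open>auto simp: om_def sn_def\<close>)
  also have "\<dots> = real T * (sn * BB) + LL * (2 * SH + real T * (real K * (sn * (\<alpha> * M))))"
    by (simp add: SH_def sum.distrib sum_distrib_left distrib_left)
  finally have A: "om * (\<Sum>t<T. \<Sum>k<K. dG (Suc t) (Suc k)) \<le> real T * (sn * BB) + LL * (2 * SH + real T * (real K * (sn * (\<alpha> * M))))" .
  have C: "\<alpha> * (real T * (real K * (sn * (\<alpha> * M)))) \<le> tau * (sn * M)"
  proof -
    have "\<alpha> * (real T * (real K * (sn * (\<alpha> * M)))) = tau * (real K * \<alpha>) * (sn * M)" by (simp add: tau_def algebra_simps)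
    also have "\<dots> \<le> tau * 1 * (sn * M)" using Kal_le1 tau0 sn0 M0 by (intro mult_right_mono mult_left_mono) auto
    finally show ?thesis by simp
  qed
  have "om * (\<alpha> * (\<Sum>t<T. \<Sum>k<K. dG (Suc t) (Suc k))) = \<alpha> * (om * (\<Sum>t<T. \<Sum>k<K. dG (Suc t) (Suc k)))" by simp
  also have "\<dots> \<le> \<alpha> * (real T * (sn * BB) + LL * (2 * SH + real T * (real K * (sn * (\<alpha> * M)))))"
    using A al_pos by (intro mult_left_mono) auto
  also have "\<dots> = tau * (sn * BB) + LL * (2 * (\<alpha> * SH) + \<alpha> * (real T * (real K * (sn * (\<alpha> * M)))))"
    by (simp add: tau_def algebra_simps)
  also have "\<dots> \<le> tau * (sn * BB) + LL * (2 * (b1 + b2 * tau) + tau * (sn * M))"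
    using L2h C LL0 unfolding SH_def by (intro add_left_mono mult_left_mono add_mono) auto
  finally have "\<alpha> * (\<Sum>t<T. \<Sum>k<K. dG (Suc t) (Suc k)) \<le> (tau * (sn * BB) + LL * (2 * (b1 + b2 * tau) + tau * (sn * M))) / om"
    by (rule div_from_mult[OF om0])
  also have "\<dots> = g1 + g2 * tau" unfolding g1_def g2_def using om0 by (simp add: field_simps)
  finally show ?thesis .
qed

lemma L4: "(\<Sum>t<T. \<Sum>k<K. ee (Suc t) (Suc k)) \<le> e1 + e2 * tau"
proof -
  have "(\<Sum>t<T. \<Sum>k<K. ee (Suc t) (Suc k))
     = M * sn * (\<alpha> * (\<Sum>t<T. \<Sum>k<K. dG (Suc t) (Suc k))) + M * sn * LL * (\<alpha> * (\<Sum>t<T. \<Sum>k<K. dyh (Suc t) (Suc k)))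
       + real T * real K * (real n * \<bar>G\<bar> * \<alpha>\<^sup>2 * M\<^sup>2 / 2)"
    unfolding ee_def sn_def by (simp add: sum.distrib sum_distrib_left algebra_simps)
  also have "real T * real K * (real n * \<bar>G\<bar> * \<alpha>\<^sup>2 * M\<^sup>2 / 2) = tau * (real K * \<alpha>) * (real n * \<bar>G\<bar> * M\<^sup>2 / 2)"
    by (simp add: tau_def power2_eq_square algebra_simps)
  also have "\<dots> \<le> tau * 1 * (real n * \<bar>G\<bar> * M\<^sup>2 / 2)"
    using Kal_le1 tau0 by (intro mult_right_mono mult_left_mono) auto
  also have "M * sn * (\<alpha> * (\<Sum>t<T. \<Sum>k<K. dG (Suc t) (Suc k))) \<le> M * sn * (g1 + g2 * tau)"
    using L3 M0 sn0 by (intro mult_left_mono) auto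
  also have "M * sn * LL * (\<alpha> * (\<Sum>t<T. \<Sum>k<K. dyh (Suc t) (Suc k))) \<le> M * sn * LL * (b1 + b2 * tau)"
    using L2h M0 sn0 LL0 by (intro mult_left_mono) auto
  finally show ?thesis unfolding e1_def e2_def by (simp add: algebra_simps)
qed

lemma regret_bound:
  assumes j: "j < n"
  shows "regret_d n f x xstar j T \<le> CR0 + CR1 * tau + CR2 * H_var n X f T"
proof -
  have "oc * (\<Sum>t<T. hh (Suc t) 1) \<le> real n * \<bar>L\<bar> * M + (e1 + e2 * tau) + 2 * real n * H_var n X f T"
    using Q9 L4 unfolding oc_def by linarith
  then have hs: "(\<Sum>t<T. hh (Suc t) 1) \<le> (real n * \<bar>L\<bar> * M + (e1 + e2 * tau) + 2 * real n * H_var n X f T) / oc"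
    by (rule div_from_mult[OF oc0])
  have "regret_d n f x xstar j T \<le> (\<Sum>t<T. hh (Suc t) 1) + real n * \<bar>L\<bar> * (\<Sum>t<T. dy (Suc t) 1)"
    by (rule Q10[OF j])
  also have "\<dots> \<le> (real n * \<bar>L\<bar> * M + (e1 + e2 * tau) + 2 * real n * H_var n X f T) / oc + real n * \<bar>L\<bar> * (a1 + a2 * tau)"
    using hs L1 by (intro add_mono mult_left_mono) auto
  also have "\<dots> = CR0 + CR1 * tau + CR2 * H_var n X f T"
    unfolding CR0_def CR1_def CR2_def using oc0 by (simp add: field_simps)
  finally show ?thesis .
qed

end




lemma (in setting) regret_gen:
  assumes T1: "T \<ge> 1" and K1: "K \<ge> 1" and al: "\<alpha> = 1 / (\<rho> * real K)"
    and dom: "DOMFW n A grad X x1 T (\<lambda>_. K) (\<lambda>_. \<alpha>) x xk xh gb gh v"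
    and j: "j < n"
  shows "regret_d n f x xstar j T \<le> CR0 + CR1 * (real T * \<alpha>) + CR2 * H_var n X f T"
proof -
  interpret R: run n E A X f grad xstar x1 \<zeta> M L G \<rho> c r Bs T K \<alpha> x xk xh gb gh v
    by unfold_locales (use assms in auto)
  show ?thesis using R.regret_bound[OF j] unfolding R.tau_def .
qed


theorem corollary2:
  fixes n :: nat
    and E :: "nat \<Rightarrow> (nat \<times> nat) set"
    and A :: "nat \<Rightarrow> nat \<Rightarrow> nat \<Rightarrow> real"
    and X :: "'a::euclidean_space set"
    and f :: "nat \<Rightarrow> nat \<Rightarrow> 'a \<Rightarrow> real"
    and grad :: "nat \<Rightarrow> nat \<Rightarrow> 'a \<Rightarrow> 'a"
    and xstar :: "nat \<Rightarrow> 'a"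
    and x1 :: "nat \<Rightarrow> 'a"
    and \<zeta> M L G \<rho> \<epsilon>\<^sub>2 \<gamma>\<^sub>2 :: real
  assumes n_pos: "1 \<le> n"
    and graph_edges: "\<And>t. t \<ge> 1 \<Longrightarrow> E t \<subseteq> {..<n} \<times> {..<n}"
    and A_support: "\<And>t i j. t \<ge> 1 \<Longrightarrow> i < n \<Longrightarrow> j < n \<Longrightarrow>
                      A t i j \<ge> 0 \<and> (A t i j > 0 \<longleftrightarrow> ((j, i) \<in> E t \<or> j = i))"
    and A1a: "\<zeta> > 0" "\<And>t i j. t \<ge> 1 \<Longrightarrow> i < n \<Longrightarrow> j < n \<Longrightarrow> A t i j > 0 \<Longrightarrow> A t i j > \<zeta>"
    and A1b: "\<And>t. t \<ge> 1 \<Longrightarrow> strongly_connected n (E t)"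
    and A1c: "\<And>t i. t \<ge> 1 \<Longrightarrow> i < n \<Longrightarrow> (\<Sum>j<n. A t i j) = 1"
             "\<And>t j. t \<ge> 1 \<Longrightarrow> j < n \<Longrightarrow> (\<Sum>i<n. A t i j) = 1"
    and A2: "convex X" "compact X" "\<And>y z. y \<in> X \<Longrightarrow> z \<in> X \<Longrightarrow> norm (y - z) \<le> M"
    and A3: "\<And>i t y z. i < n \<Longrightarrow> t \<ge> 1 \<Longrightarrow> y \<in> X \<Longrightarrow> z \<in> X \<Longrightarrow>
               \<bar>f i t y - f i t z\<bar> \<le> L * norm (y - z)"
    and A4: "\<And>i t y z. i < n \<Longrightarrow> t \<ge> 1 \<Longrightarrow> y \<in> X \<Longrightarrow> z \<in> X \<Longrightarrow>
               f i t y - f i t z \<le> inner (grad i t z) (y - z) + G / 2 * (norm (y - z))\<^sup>2"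
    and convex_f: "\<And>i t. i < n \<Longrightarrow> t \<ge> 1 \<Longrightarrow> convex_on X (f i t)"
    and grad_f: "\<And>i t y. i < n \<Longrightarrow> t \<ge> 1 \<Longrightarrow> y \<in> X \<Longrightarrow>
               (f i t has_derivative (\<lambda>h. inner (grad i t y) h)) (at y within X)"
    and xstar_min: "\<And>t. t \<ge> 1 \<Longrightarrow> xstar t \<in> X \<and> (\<forall>z\<in>X. Fsum n f t (xstar t) \<le> Fsum n f t z)"
    and init: "\<And>i. i < n \<Longrightarrow> x1 i \<in> X"
    and HT_small: "(\<lambda>T. H_var n X f T) \<in> o(\<lambda>T. real T)"
    and params: "\<rho> \<ge> 1" "\<epsilon>\<^sub>2 > 0" "0 < \<gamma>\<^sub>2" "\<gamma>\<^sub>2 \<le> 1"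
  shows "\<exists>C. \<forall>T\<ge>1.
           let K = (\<lambda>t::nat. nat \<lceil>\<epsilon>\<^sub>2 * real T powr \<gamma>\<^sub>2\<rceil> + 1);
               al = (\<lambda>t::nat. 1 / (\<rho> * real (K t)));
               N_LO = real (\<Sum>t=1..T. K t);
               H = H_var n X f T
           in (\<forall>x xk xh gb gh v. DOMFW n A grad X x1 T K al x xk xh gb gh v \<longrightarrow>
                 (\<forall>j<n. regret_d n f x xstar j T \<le> C * (real T powr (1 - \<gamma>\<^sub>2) + H) \<and>
                        (1 - log (real T) H \<le> \<gamma>\<^sub>2 \<longrightarrow> regret_d n f x xstar j T \<le> C * (1 + H))))
              \<and> N_LO \<le> C * real T powr (1 + \<gamma>\<^sub>2)
              \<and> (\<gamma>\<^sub>2 = 1 - log (real T) H \<longrightarrow> N_LO \<le> C * real T powr (2 - log (real T) H))"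
  proof -
  have Xne: "xstar 1 \<in> X" using xstar_min[of 1] by simp
  have "rel_interior X \<noteq> {}" using rel_interior_eq_empty[OF A2(1)] Xne by auto
  then obtain c where "c \<in> rel_interior X" by auto
  then obtain r where cX: "c \<in> X" and r0: "r > 0" and cb: "cball c r \<inter> affine hull X \<subseteq> X"
    unfolding mem_rel_interior_cball by auto
  obtain Bs where Bs: "pairwise orthogonal Bs" "\<And>x. x \<in> Bs \<Longrightarrow> norm x = 1"
      "independent Bs" "span Bs = span ((\<lambda>x. x - c) ` X)"
    using orthonormal_basis_subspace[OF subspace_span, of "(\<lambda>x. x - c) ` X"] by metis
  have fin: "finite Bs" using independent_imp_finite Bs(3) by blast
  have prj: "proj X c r Bs"
    by unfold_locales (use cX r0 cb Bs fin in auto)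
  have sett: "setting n E A X f grad xstar x1 \<zeta> M L G \<rho> c r Bs"
    by unfold_locales (fact n_pos graph_edges A_support A1a A1b A1c A2 A3 A4 convex_f grad_f xstar_min init params cX r0 cb Bs fin)+
  interpret S: setting n E A X f grad xstar x1 \<zeta> M L G \<rho> c r Bs by (rule sett)
  define C1 where "C1 = S.CR0 + S.CR1 / \<epsilon>\<^sub>2 + S.CR2"
  define C where "C = 2 * C1 + \<epsilon>\<^sub>2 + 2"
  have C1_0: "0 \<le> C1" using S.consts_nonneg params by (simp add: C1_def)
  have CC1: "2 * C1 \<le> C" and CCe: "\<epsilon>\<^sub>2 + 2 \<le> C" using C1_0 params by (auto simp: C_def)
  show ?thesis
  proof (rule exI[of _ C], intro allI impI)
    fix T :: nat assume T: "T \<ge> 1"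
    define Kc where "Kc = nat \<lceil>\<epsilon>\<^sub>2 * real T powr \<gamma>\<^sub>2\<rceil> + 1"
    define al where "al = 1 / (\<rho> * real Kc)"
    define H where "H = H_var n X f T"
    have H0: "0 \<le> H" unfolding H_def by (rule S.H0)
    have Tp: "real T \<ge> 1" using T by simp
    have Tg: "real T powr \<gamma>\<^sub>2 > 0" using T by simp
    have Tg1: "1 \<le> real T powr \<gamma>\<^sub>2" using Tp params by (intro ge_one_powr_ge_zero) auto
    have Kc1: "Kc \<ge> 1" by (simp add: Kc_def)
    define a where "a = \<epsilon>\<^sub>2 * real T powr \<gamma>\<^sub>2"
    have a0: "0 < a" unfolding a_def using params Tg by simp
    have rK: "real Kc = real_of_int \<lceil>a\<rceil> + 1"
      unfolding Kc_def a_def[symmetric] using a0 by simp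
    have Kge: "a \<le> real Kc" using rK le_of_int_ceiling[of a] by linarith
    have Kle: "real Kc \<le> a + 2" using rK ceiling_correct[of a] by linarith
    have T1g: "real T powr (1 - \<gamma>\<^sub>2) = real T / real T powr \<gamma>\<^sub>2"
      using Tp by (simp add: powr_diff)
    have Tge1: "1 \<le> real T powr (1 - \<gamma>\<^sub>2)" using Tp params by (intro ge_one_powr_ge_zero) auto
    have tau: "real T * al \<le> real T powr (1 - \<gamma>\<^sub>2) / \<epsilon>\<^sub>2"
    proof -
      have "real T * al = real T / (\<rho> * real Kc)" by (simp add: al_def)
      also have "\<dots> \<le> real T / (1 * a)"
        using Kge params a0 Tp by (intro divide_left_mono mult_mono) auto
      also have "\<dots> = real T powr (1 - \<gamma>\<^sub>2) / \<epsilon>\<^sub>2" using params by (simp add: a_def T1g)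
      finally show ?thesis .
    qed
    have main: "regret_d n f x xstar j T \<le> C1 * (real T powr (1 - \<gamma>\<^sub>2) + H)"
      if dom: "DOMFW n A grad X x1 T (\<lambda>_. Kc) (\<lambda>_. al) x xk xh gb gh v" and j: "j < n" for x xk xh gb gh v j
    proof -
      have "regret_d n f x xstar j T \<le> S.CR0 + S.CR1 * (real T * al) + S.CR2 * H"
        unfolding H_def by (rule S.regret_gen[OF T Kc1 al_def dom j])
      also have "\<dots> \<le> S.CR0 * real T powr (1 - \<gamma>\<^sub>2) + S.CR1 * (real T powr (1 - \<gamma>\<^sub>2) / \<epsilon>\<^sub>2) + S.CR2 * H"
      proof -
        have "S.CR0 * 1 \<le> S.CR0 * real T powr (1 - \<gamma>\<^sub>2)" using S.consts_nonneg Tge1 by (intro mult_left_mono) auto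
        moreover have "S.CR1 * (real T * al) \<le> S.CR1 * (real T powr (1 - \<gamma>\<^sub>2) / \<epsilon>\<^sub>2)"
          using S.consts_nonneg tau by (intro mult_left_mono) auto
        ultimately show ?thesis by simp
      qed
      also have "\<dots> \<le> C1 * (real T powr (1 - \<gamma>\<^sub>2) + H)"
      proof -
        have "S.CR0 * real T powr (1 - \<gamma>\<^sub>2) + S.CR1 * (real T powr (1 - \<gamma>\<^sub>2) / \<epsilon>\<^sub>2) + S.CR2 * H
            = (S.CR0 + S.CR1 / \<epsilon>\<^sub>2) * real T powr (1 - \<gamma>\<^sub>2) + S.CR2 * H" by (simp add: algebra_simps)
        also have "\<dots> \<le> C1 * real T powr (1 - \<gamma>\<^sub>2) + C1 * H"
          using S.consts_nonneg H0 params by (intro add_mono mult_right_mono) (auto simp: C1_def)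
        finally show ?thesis by (simp add: algebra_simps)
      qed
      finally show ?thesis .
    qed
    have pw: "real T powr (1 - \<gamma>\<^sub>2) \<le> 1 + H" if cond: "1 - log (real T) H \<le> \<gamma>\<^sub>2"
    proof (cases "T = 1")
      case True then show ?thesis using H0 by simp
    next
      case False
      then have T2: "real T > 1" using T by simp
      show ?thesis
      proof (cases "H > 0")
        case True
        have "real T powr (1 - \<gamma>\<^sub>2) \<le> real T powr (log (real T) H)"
          using cond T2 by (intro powr_mono) auto
        also have "\<dots> = H" using T2 True by simp
        finally show ?thesis by simp
      next
        case False
        then have "H = 0" using H0 by simp
        then have "log (real T) H = 0" by (simp add: log_def)
        then have "\<gamma>\<^sub>2 = 1" using cond params by simp
        then show ?thesis using H0 T2 by simp
      qed
    qed
    have NLO: "real (\<Sum>t=1..T. Kc) \<le> (\<epsilon>\<^sub>2 + 2) * real T powr (1 + \<gamma>\<^sub>2)"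
    proof -
      have "real (\<Sum>t=1..T. Kc) = real T * real Kc" by simp
      also have "\<dots> \<le> real T * (a + 2)" using Kle Tp by (intro mult_left_mono) auto
      also have "\<dots> = \<epsilon>\<^sub>2 * (real T * real T powr \<gamma>\<^sub>2) + 2 * real T" by (simp add: a_def algebra_simps)
      also have "\<dots> \<le> \<epsilon>\<^sub>2 * (real T * real T powr \<gamma>\<^sub>2) + 2 * (real T * real T powr \<gamma>\<^sub>2)"
        using Tg1 Tp by (intro add_left_mono mult_left_mono) (auto simp: mult_le_cancel_left1)
      also have "real T * real T powr \<gamma>\<^sub>2 = real T powr (1 + \<gamma>\<^sub>2)"
        using Tp by (simp add: powr_add)
      finally show ?thesis by (simp add: algebra_simps)
    qed
    have Tpow0: "0 \<le> real T powr (1 + \<gamma>\<^sub>2)" by simp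
    have NLO': "real (\<Sum>t=1..T. Kc) \<le> C * real T powr (1 + \<gamma>\<^sub>2)"
      using NLO CCe Tpow0 by (smt (verit) mult_right_mono)
    have part1: "\<forall>x xk xh gb gh v. DOMFW n A grad X x1 T (\<lambda>_. Kc) (\<lambda>_. al) x xk xh gb gh v \<longrightarrow>
          (\<forall>j<n. regret_d n f x xstar j T \<le> C * (real T powr (1 - \<gamma>\<^sub>2) + H) \<and>
                 (1 - log (real T) H \<le> \<gamma>\<^sub>2 \<longrightarrow> regret_d n f x xstar j T \<le> C * (1 + H)))"
    proof (intro allI impI conjI)
      fix x xk xh gb gh v j
      assume dom: "DOMFW n A grad X x1 T (\<lambda>_. Kc) (\<lambda>_. al) x xk xh gb gh v" and j: "j < n"
      have m: "regret_d n f x xstar j T \<le> C1 * (real T powr (1 - \<gamma>\<^sub>2) + H)" by (rule main[OF dom j])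
      have nn: "0 \<le> real T powr (1 - \<gamma>\<^sub>2) + H" using H0 by simp
      have "C1 * (real T powr (1 - \<gamma>\<^sub>2) + H) \<le> C * (real T powr (1 - \<gamma>\<^sub>2) + H)"
        using CC1 C1_0 nn by (intro mult_right_mono) auto
      then show "regret_d n f x xstar j T \<le> C * (real T powr (1 - \<gamma>\<^sub>2) + H)" using m by simp
      assume cond: "1 - log (real T) H \<le> \<gamma>\<^sub>2"
      have "C1 * (real T powr (1 - \<gamma>\<^sub>2) + H) \<le> C1 * (2 * (1 + H))"
        using pw[OF cond] C1_0 H0 by (intro mult_left_mono) auto
      also have "\<dots> = (2 * C1) * (1 + H)" by simp
      also have "\<dots> \<le> C * (1 + H)" using CC1 H0 by (intro mult_right_mono) auto
      finally show "regret_d n f x xstar j T \<le> C * (1 + H)" using m by simp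
    qed
    have part3: "\<gamma>\<^sub>2 = 1 - log (real T) H \<longrightarrow> real (\<Sum>t=1..T. Kc) \<le> C * real T powr (2 - log (real T) H)"
    proof
      assume "\<gamma>\<^sub>2 = 1 - log (real T) H"
      then have e: "2 - log (real T) H = 1 + \<gamma>\<^sub>2" by simp
      show "real (\<Sum>t=1..T. Kc) \<le> C * real T powr (2 - log (real T) H)" unfolding e by (rule NLO')
    qed
    show "let K = (\<lambda>t::nat. nat \<lceil>\<epsilon>\<^sub>2 * real T powr \<gamma>\<^sub>2\<rceil> + 1);
               al = (\<lambda>t::nat. 1 / (\<rho> * real (K t)));
               N_LO = real (\<Sum>t=1..T. K t);
               H = H_var n X f T
           in (\<forall>x xk xh gb gh v. DOMFW n A grad X x1 T K al x xk xh gb gh v \<longrightarrow>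
                 (\<forall>j<n. regret_d n f x xstar j T \<le> C * (real T powr (1 - \<gamma>\<^sub>2) + H) \<and>
                        (1 - log (real T) H \<le> \<gamma>\<^sub>2 \<longrightarrow> regret_d n f x xstar j T \<le> C * (1 + H))))
              \<and> N_LO \<le> C * real T powr (1 + \<gamma>\<^sub>2)
              \<and> (\<gamma>\<^sub>2 = 1 - log (real T) H \<longrightarrow> N_LO \<le> C * real T powr (2 - log (real T) H))"
      using part1 NLO' part3 unfolding Let_def Kc_def[symmetric] al_def[symmetric] H_def[symmetric] by simp
  qed
qed


end
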